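(* Let $\gamma>0$ and $r,k,q\in\mathbb{N}$ with $r/2<k\leq r-1$ and $r=k+q$. Let $c:=\lceil r/q\rceil$. Let $H_0$ be the complete bipartite graph $K_{k,q+1}$ with distinguished ordered pair $(w_1,w_2)$ of two distinct vertices both in the part of size $q+1$, and for $t\in\mathbb{N}$ let $\bm{{\mathcal H}}^t:=\{(H_0,s):1\leq s\leq 2^t\}$, where $(H_0,s)$ denotes the vector of length $s$ all of whose entries are $H_0$. Then there exist constants $\beta_3'=\beta_3'(r,k,\gamma)>0$ and $\alpha=\alpha(r,k,\gamma)>0$ such that for all sufficiently large $n$, the vertex set of any $n$-vertex graph $G$ with $\delta(G)\geq(1-\frac{k}{r}+\gamma)n$ can be partitioned into at most $c-1$ parts, each of which is $(\bm{{\mathcal H}}^c;\beta_3')$-closed and has size at least $\alpha n$.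
   Context: Let $\bm{H}=(H^1,\dots,H^t)$ be a vector of $(r+1)$-vertex graphs, each with an ordered pair of distinct distinguished vertices $(w_1^i,w_2^i)$. An $\bm{H}$-path is obtained by taking vertex-disjoint copies of $H^1,\dots,H^t$ and identifying $w_2^i$ with $w_1^{i+1}$ for $i\in[t-1]$; its endpoints are $w_1^1$ and $w_2^t$. Two vertices $x,y$ of an $n$-vertex graph $G$ are $(\bm{H};\beta)$-reachable if there are at least $\beta n^{tr-1}$ distinct labelled embeddings of the $\bm{H}$-path into $G$ mapping the endpoints to $\{x,y\}$. For a set $\bm{{\mathcal H}}$ of such vectors, $x,y$ are $(\bm{{\mathcal H}};\beta)$-reachable if they are $(\bm{H};\beta)$-reachable for some $\bm{H}\in\bm{{\mathcal H}}$, and a vertex set $V'\subseteq V(G)$ is $(\bm{{\mathcal H}};\beta)$-closed if every pair of vertices of $V'$ is $(\bm{{\mathcal H}};\beta)$-reachable in $G$ (the paths need not lie inside $V'$). *)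

theory Defs
  imports Complex_Main "HOL-Library.Disjoint_Sets" "HOL-Library.FuncSet"
begin

definition is_graph :: "'a set \<Rightarrow> ('a \<Rightarrow> 'a \<Rightarrow> bool) \<Rightarrow> bool" where
  "is_graph V E \<longleftrightarrow> finite V \<and> (\<forall>u v. E u v \<longrightarrow> u \<in> V \<and> v \<in> V \<and> E v u \<and> u \<noteq> v)"

definition min_deg_ge :: "'a set \<Rightarrow> ('a \<Rightarrow> 'a \<Rightarrow> bool) \<Rightarrow> real \<Rightarrow> bool" where
  "min_deg_ge V E d \<longleftrightarrow> (\<forall>v\<in>V. real (card {u\<in>V. E v u}) \<ge> d)"

text \<open>The (H0,s)-path, where H0 = K_{k,q+1} with distinguished vertices w1,w2
both in the part of size q+1.  Vertices:
  J j   (j \<le> s): the joint vertices; J i = w1 of copy i, J (i+1) = w2 of copy i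
        (so copy i's w2 is identified with copy (i+1)'s w1); J 0, J s are the endpoints;
  A i a (i < s, a < k): the part of size k of copy i;
  B i b (i < s, b < q - 1): the remaining q-1 vertices of the part of size q+1 of copy i.\<close>

datatype pvert = J nat | A nat nat | B nat nat

definition path_verts :: "nat \<Rightarrow> nat \<Rightarrow> nat \<Rightarrow> pvert set" where
  "path_verts k q s =
     {J j | j. j \<le> s} \<union> {A i a | i a. i < s \<and> a < k} \<union> {B i b | i b. i < s \<and> b < q - 1}"

definition path_edge_dir :: "pvert \<Rightarrow> pvert \<Rightarrow> bool" where
  "path_edge_dir u v \<longleftrightarrow>
     (\<exists>i a. u = A i a \<and> (v = J i \<or> v = J (Suc i) \<or> (\<exists>b. v = B i b)))"

definition path_edge :: "pvert \<Rightarrow> pvert \<Rightarrow> bool" where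
  "path_edge u v \<longleftrightarrow> path_edge_dir u v \<or> path_edge_dir v u"

definition path_embeddings ::
  "nat \<Rightarrow> nat \<Rightarrow> nat \<Rightarrow> 'a set \<Rightarrow> ('a \<Rightarrow> 'a \<Rightarrow> bool) \<Rightarrow> 'a \<Rightarrow> 'a \<Rightarrow> (pvert \<Rightarrow> 'a) set" where
  "path_embeddings k q s V E x y =
     {f \<in> extensional_funcset (path_verts k q s) V.
        inj_on f (path_verts k q s) \<and>
        (\<forall>u\<in>path_verts k q s. \<forall>v\<in>path_verts k q s. path_edge u v \<longrightarrow> E (f u) (f v)) \<and>
        {f (J 0), f (J s)} = {x, y}}"

text \<open>(H;beta)-reachability with H = (H0,s): each H0 has r+1 = k+q+1 vertices.\<close>

definition path_reachable ::
  "nat \<Rightarrow> nat \<Rightarrow> nat \<Rightarrow> real \<Rightarrow> 'a set \<Rightarrow> ('a \<Rightarrow> 'a \<Rightarrow> bool) \<Rightarrow> 'a \<Rightarrow> 'a \<Rightarrow> bool" where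
  "path_reachable k q s \<beta> V E x y \<longleftrightarrow>
     real (card (path_embeddings k q s V E x y)) \<ge> \<beta> * real (card V) ^ (s * (k + q) - 1)"

definition family_reachable ::
  "nat \<Rightarrow> nat \<Rightarrow> nat \<Rightarrow> real \<Rightarrow> 'a set \<Rightarrow> ('a \<Rightarrow> 'a \<Rightarrow> bool) \<Rightarrow> 'a \<Rightarrow> 'a \<Rightarrow> bool" where
  "family_reachable k q t \<beta> V E x y \<longleftrightarrow>
     (\<exists>s. 1 \<le> s \<and> s \<le> 2 ^ t \<and> path_reachable k q s \<beta> V E x y)"

definition family_closed ::
  "nat \<Rightarrow> nat \<Rightarrow> nat \<Rightarrow> real \<Rightarrow> 'a set \<Rightarrow> ('a \<Rightarrow> 'a \<Rightarrow> bool) \<Rightarrow> 'a set \<Rightarrow> bool" where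
  "family_closed k q t \<beta> V E W \<longleftrightarrow>
     (\<forall>x\<in>W. \<forall>y\<in>W. x \<noteq> y \<longrightarrow> family_reachable k q t \<beta> V E x y)"

end

theory Submission
  imports Defs "HOL-Analysis.Convex"
begin

lemma card_minus_one_le:
  assumes "finite S" shows "real (card S) - 1 \<le> real (card (S - {w}))"
proof (cases "w \<in> S")
  case True
  then have "card S \<ge> 1" using assms by (simp add: Suc_le_eq card_gt_0_iff) blast
  then obtain j where j: "card S = Suc j" by (cases "card S") auto
  then show ?thesis using True assms by (simp add: card_Diff_singleton of_nat_Suc)
next
  case False then show ?thesis by simp
qed

lemma nonincr_stall:
  fixes f :: "nat \<Rightarrow> nat"
  assumes mono: "\<And>l. f (Suc l) \<le> f l" and f0: "f 0 \<le> c - 1" and pos: "\<And>l. f l \<ge> 1" and c2: "c \<ge> 2"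
  shows "\<exists>m. Suc m < c \<and> f m = f (Suc m)"
proof (rule ccontr)
  assume neg: "\<not> ?thesis"
  then have dec: "f (Suc m) < f m" if "Suc m < c" for m
  proof -
    have "f m \<noteq> f (Suc m)" using that neg by blast
    then show ?thesis using mono[of m] by simp
  qed
  have "\<And>j. j \<le> c - 1 \<Longrightarrow> f j + j \<le> f 0"
  proof -
    fix j show "j \<le> c - 1 \<Longrightarrow> f j + j \<le> f 0"
    proof (induction j)
      case 0 then show ?case by simp
    next
      case (Suc j)
      then have "Suc j < c" by simp
      then have "f (Suc j) < f j" by (rule dec)
      with Suc show ?case by simp
    qed
  qed
  from this[of "c - 1"] have "f (c - 1) + (c - 1) \<le> c - 1" using f0 by simp
  then have "f (c - 1) = 0" by simp
  with pos[of "c - 1"] show False by simp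
qed

lemma abstract_partition:
  fixes V :: "'a set" and R :: "nat \<Rightarrow> 'a \<Rightarrow> 'a \<Rightarrow> bool" and c :: nat and \<delta>0 \<theta> :: real
  assumes fin: "finite V" and Vne: "V \<noteq> {}"
  and sym: "\<And>l x y. R l x y \<Longrightarrow> R l y x"
  and mono: "\<And>l x y. R l x y \<Longrightarrow> R (Suc l) x y"
  and P1: "\<And>x. x \<in> V \<Longrightarrow> real (card {y\<in>V. y \<noteq> x \<and> R 0 x y}) \<ge> \<delta>0 * real (card V)"
  and P2: "\<And>S. S \<subseteq> V \<Longrightarrow> card S \<ge> c \<Longrightarrow> \<exists>x\<in>S. \<exists>y\<in>S. x \<noteq> y \<and> R 0 x y"
  and P3: "\<And>l x y. l < c \<Longrightarrow> x \<in> V \<Longrightarrow> y \<in> V \<Longrightarrow> x \<noteq> y \<Longrightarrow>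
              real (card {z\<in>V. R l x z \<and> R l z y}) \<ge> \<theta> * real (card V) \<Longrightarrow> R (Suc l) x y"
  and \<theta>pos: "\<theta> > 0" and \<theta>le: "\<theta> * 4 * real c ^ 2 \<le> \<delta>0" and nbig: "real (card V) * \<delta>0 > 2 * real c"
  and c2: "c \<ge> 2"
  shows "\<exists>P. partition_on V P \<and> card P \<le> c - 1 \<and>
    (\<forall>X\<in>P. (\<forall>x\<in>X. \<forall>y\<in>X. x \<noteq> y \<longrightarrow> R c x y) \<and> real (card X) \<ge> \<delta>0 / 2 * real (card V))"
proof -
  define n where "n = real (card V)"
  have monoN: "R l' x y" if "l \<le> l'" "R l x y" for l l' x y
    using that
  proof (induction l' rule: dec_induct)
    case base then show ?case by simp
  next
    case (step l') then show ?case using mono by blast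
  qed
  define fam where "fam l S \<longleftrightarrow> S \<subseteq> V \<and> (\<forall>x\<in>S. \<forall>y\<in>S. x \<noteq> y \<longrightarrow> \<not> R l x y)" for l S
  have fam_le: "card S \<le> c - 1" if "fam l S" for l S
  proof (rule ccontr)
    assume "\<not> card S \<le> c - 1"
    then have "card S \<ge> c" by simp
    with P2 that obtain x y where "x \<in> S" "y \<in> S" "x \<noteq> y" "R 0 x y" unfolding fam_def by blast
    then have "R l x y" using monoN[of 0 l] by simp
    with that \<open>x \<in> S\<close> \<open>y \<in> S\<close> \<open>x \<noteq> y\<close> show False unfolding fam_def by blast
  qed
  have fam_down: "fam l S" if "fam (Suc l) S" for l S
    using that mono unfolding fam_def by blast
  define D where "D l = Max (card ` {S. fam l S})" for l
  have famfin: "finite {S. fam l S}" for l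
    by (rule finite_subset[of _ "Pow V"]) (auto simp: fam_def fin)
  have famne: "{} \<in> {S. fam l S}" for l by (simp add: fam_def)
  have D_ge: "card S \<le> D l" if "fam l S" for l S
    unfolding D_def using famfin that by (intro Max_ge) auto
  have D_in: "\<exists>S. fam l S \<and> card S = D l" for l
  proof -
    have "D l \<in> card ` {S. fam l S}" unfolding D_def using famfin famne by (intro Max_in) auto
    then show ?thesis by auto
  qed
  have D_mono: "D (Suc l) \<le> D l" for l
    using D_in[of "Suc l"] D_ge fam_down by metis
  have D0: "D 0 \<le> c - 1" using D_in[of 0] fam_le by metis
  obtain v0 where "v0 \<in> V" using Vne by blast
  have D_pos: "D l \<ge> 1" for l
  proof -
    have "fam l {v0}" using \<open>v0 \<in> V\<close> by (simp add: fam_def)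
    then show ?thesis using D_ge[of l "{v0}"] by simp
  qed
  obtain m where m: "Suc m < c" "D m = D (Suc m)"
    using nonincr_stall[of D c, OF D_mono D0 D_pos c2] by blast
  define d where "d = D m"
  obtain F where F: "fam (Suc m) F" "card F = d" using D_in[of "Suc m"] m(2) d_def by metis
  have Fm: "fam m F" using F fam_down by blast
  have FV: "F \<subseteq> V" using F unfolding fam_def by blast
  have Ffin: "finite F" using FV fin finite_subset by blast
  have cover: "\<exists>v\<in>G. R m w v" if "fam m G" "card G = d" "w \<in> V" "w \<notin> G" for G w
  proof (rule ccontr)
    assume "\<not> ?thesis"
    then have "fam m (insert w G)" using that sym unfolding fam_def by blast
    moreover have "card (insert w G) = d + 1"
    proof -
      have "finite G" using that fin finite_subset unfolding fam_def by blast
      then show ?thesis using that by simp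
    qed
    ultimately show False using D_ge[of m "insert w G"] d_def by simp
  qed
  define N where "N l x = {y\<in>V. y \<noteq> x \<and> R l x y}" for l x
  have Nfin: "finite (N l x)" for l x unfolding N_def using fin by simp
  have N_mono: "N 0 x \<subseteq> N m x" for x unfolding N_def using monoN[of 0 m] by auto
  have Nbig: "real (card (N m x)) \<ge> \<delta>0 * n" if "x \<in> V" for x
  proof -
    have "card (N 0 x) \<le> card (N m x)" using N_mono Nfin card_mono by metis
    then show ?thesis using P1[OF that] unfolding N_def n_def by linarith
  qed
  have small: "real (card (N m v \<inter> N m v')) < \<theta> * n" if "v \<in> F" "v' \<in> F" "v \<noteq> v'" for v v'
  proof (rule ccontr)
    assume "\<not> ?thesis"
    then have a: "real (card (N m v \<inter> N m v')) \<ge> \<theta> * n" by simp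
    have "N m v \<inter> N m v' \<subseteq> {z\<in>V. R m v z \<and> R m z v'}" unfolding N_def using sym by auto
    then have "card (N m v \<inter> N m v') \<le> card {z\<in>V. R m v z \<and> R m z v'}"
      using fin by (intro card_mono) auto
    with a have "real (card {z\<in>V. R m v z \<and> R m z v'}) \<ge> \<theta> * real (card V)" unfolding n_def by linarith
    then have "R (Suc m) v v'" using P3[of m v v'] m(1) that FV by auto
    then show False using F(1) that unfolding fam_def by blast
  qed
  define Core where "Core v = {u\<in>V. (u = v \<or> R m v u) \<and> (\<forall>v'\<in>F - {v}. u \<noteq> v' \<and> \<not> R m v' u)}" for v
  have Core_fin: "finite (Core v)" for v unfolding Core_def using fin by simp
  have v_in_Core: "v \<in> Core v" if "v \<in> F" for v
    using that FV Fm unfolding Core_def fam_def by blast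
  have core_closed: "R m w u" if "v \<in> F" "u \<in> Core v" "w \<in> Core v" "u \<noteq> w" for v u w
  proof -
    define G where "G = insert u (F - {v})"
    have uV: "u \<in> V" and wV: "w \<in> V" using that unfolding Core_def by auto
    have unF: "u \<notin> F - {v}" using that(2) unfolding Core_def by blast
    have wnF: "w \<notin> F - {v}" using that(3) unfolding Core_def by blast
    have "fam m G" unfolding G_def fam_def
    proof (intro conjI ballI impI)
      show "insert u (F - {v}) \<subseteq> V" using FV uV by blast
    next
      fix x y assume x: "x \<in> insert u (F - {v})" and y: "y \<in> insert u (F - {v})" and xy: "x \<noteq> y"
      show "\<not> R m x y"
      proof (cases "x = u")
        case True
        then have "y \<in> F - {v}" using y xy by blast
        then show ?thesis using that(2) True sym unfolding Core_def by blast
      next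
        case False
        then have xF: "x \<in> F - {v}" using x by blast
        show ?thesis
        proof (cases "y = u")
          case True then show ?thesis using that(2) xF unfolding Core_def by blast
        next
          case False
          then have "y \<in> F - {v}" using y by blast
          then show ?thesis using xF xy Fm unfolding fam_def by blast
        qed
      qed
    qed
    moreover have "card G = d"
    proof -
      have "card (F - {v}) = d - 1" using F(2) that(1) Ffin by simp
      moreover have "d \<ge> 1" using D_pos d_def by simp
      ultimately show ?thesis unfolding G_def using unF Ffin by simp
    qed
    moreover have "w \<notin> G" unfolding G_def using wnF that(4) by blast
    ultimately obtain v'' where v'': "v'' \<in> G" "R m w v''" using cover wV by blast
    show ?thesis
    proof (cases "v'' = u")
      case True then show ?thesis using v'' by simp
    next
      case False
      then have "v'' \<in> F - {v}" using v'' unfolding G_def by blast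
      then have "\<not> R m v'' w" using that(3) unfolding Core_def by blast
      then show ?thesis using v''(2) sym by blast
    qed
  qed
  have core_disj: "Core v \<inter> Core v' = {}" if "v \<in> F" "v' \<in> F" "v \<noteq> v'" for v v'
    using that unfolding Core_def by blast
  have core_big: "real (card (Core v)) \<ge> \<delta>0 / 2 * n" if "v \<in> F" for v
  proof -
    have sub: "N m v \<subseteq> Core v \<union> (\<Union>v'\<in>F - {v}. N m v \<inter> N m v')"
    proof
      fix u assume u: "u \<in> N m v"
      show "u \<in> Core v \<union> (\<Union>v'\<in>F - {v}. N m v \<inter> N m v')"
      proof (cases "\<exists>v'\<in>F - {v}. R m v' u")
        case True
        then obtain v' where "v' \<in> F - {v}" "R m v' u" by blast
        moreover have "u \<noteq> v'" using u \<open>v' \<in> F - {v}\<close> Fm that unfolding N_def fam_def by auto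
        ultimately show ?thesis using u unfolding N_def by auto
      next
        case False
        have "\<forall>v'\<in>F - {v}. u \<noteq> v'"
          using u Fm that unfolding N_def fam_def by auto
        then have "u \<in> Core v" using False u unfolding Core_def N_def by auto
        then show ?thesis by blast
      qed
    qed
    have "card (N m v) \<le> card (Core v \<union> (\<Union>v'\<in>F - {v}. N m v \<inter> N m v'))"
      using sub Core_fin Nfin Ffin by (intro card_mono) auto
    also have "\<dots> \<le> card (Core v) + card (\<Union>v'\<in>F - {v}. N m v \<inter> N m v')"
      by (rule card_Un_le)
    also have "card (\<Union>v'\<in>F - {v}. N m v \<inter> N m v') \<le> (\<Sum>v'\<in>F - {v}. card (N m v \<inter> N m v'))"
      by (rule card_UN_le) (use Ffin in auto)
    finally have A: "real (card (N m v)) \<le> real (card (Core v)) + (\<Sum>v'\<in>F - {v}. real (card (N m v \<inter> N m v')))"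
      by (simp flip: of_nat_sum)
    have "(\<Sum>v'\<in>F - {v}. real (card (N m v \<inter> N m v'))) \<le> (\<Sum>v'\<in>F - {v}. \<theta> * n)"
      using small that by (intro sum_mono) (auto intro: less_imp_le)
    also have "\<dots> = real (card (F - {v})) * (\<theta> * n)" by simp
    also have "\<dots> \<le> real c * (\<theta> * n)"
    proof -
      have "card (F - {v}) \<le> c" using fam_le[OF Fm] Ffin by (meson card_Diff1_le le_trans diff_le_self)
      moreover have "\<theta> * n \<ge> 0" using \<theta>pos unfolding n_def by simp
      ultimately show ?thesis by (intro mult_right_mono) auto
    qed
    finally have B: "real (card (N m v)) \<le> real (card (Core v)) + real c * (\<theta> * n)" using A by linarith
    have "real c * \<theta> \<le> \<delta>0 / 2"
    proof -
      have "real c \<ge> 1" using c2 by simp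
      then have "real c \<le> real c ^ 2" by (simp add: power2_eq_square)
      then have "real c * \<theta> \<le> real c ^ 2 * \<theta>" using \<theta>pos by (intro mult_right_mono) auto
      moreover have "real c ^ 2 * \<theta> \<le> \<delta>0 / 4" using \<theta>le by (simp add: algebra_simps)
      moreover have "0 \<le> real c ^ 2 * \<theta>" using \<theta>pos by simp
      ultimately show ?thesis by linarith
    qed
    then have "real c * (\<theta> * n) \<le> \<delta>0 / 2 * n" unfolding n_def
      by (metis mult.assoc mult_right_mono of_nat_0_le_iff)
    then show ?thesis using B Nbig[of v] that FV by auto
  qed
  define L where "L = V - (\<Union>v\<in>F. Core v)"
  have L_sub: "L \<subseteq> (\<Union>p\<in>(F \<times> F) - {p. fst p = snd p}. N m (fst p) \<inter> N m (snd p))"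
  proof
    fix u assume u: "u \<in> L"
    then have uV: "u \<in> V" and unc: "\<forall>v\<in>F. u \<notin> Core v" unfolding L_def by auto
    have unF: "u \<notin> F" using unc v_in_Core by blast
    obtain v where v: "v \<in> F" "R m u v" using cover[OF Fm F(2)] uV unF by blast
    have "u \<notin> Core v" using unc v by blast
    then obtain v' where v': "v' \<in> F - {v}" "u = v' \<or> R m v' u"
      using v uV sym unfolding Core_def by blast
    then have "R m v' u" using unF by auto
    then have "u \<in> N m v \<inter> N m v'" using v v' uV unF sym unfolding N_def by auto
    then show "u \<in> (\<Union>p\<in>(F \<times> F) - {p. fst p = snd p}. N m (fst p) \<inter> N m (snd p))"
      using v v' by (intro UN_I[of "(v, v')"]) auto
  qed
  have L_small: "real (card L) \<le> real c ^ 2 * \<theta> * n"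
  proof -
    have ffin: "finite ((F \<times> F) - {p. fst p = snd p})" using Ffin by simp
    have "card L \<le> card (\<Union>p\<in>(F \<times> F) - {p. fst p = snd p}. N m (fst p) \<inter> N m (snd p))"
      using L_sub ffin Nfin by (intro card_mono) auto
    also have "\<dots> \<le> (\<Sum>p\<in>(F \<times> F) - {p. fst p = snd p}. card (N m (fst p) \<inter> N m (snd p)))"
      by (rule card_UN_le[OF ffin])
    finally have A: "real (card L) \<le> (\<Sum>p\<in>(F \<times> F) - {p. fst p = snd p}. real (card (N m (fst p) \<inter> N m (snd p))))"
      by (simp flip: of_nat_sum)
    also have "\<dots> \<le> (\<Sum>p\<in>(F \<times> F) - {p. fst p = snd p}. \<theta> * n)"
      using small by (intro sum_mono) (auto intro: less_imp_le)
    also have "\<dots> = real (card ((F \<times> F) - {p. fst p = snd p})) * (\<theta> * n)" by simp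
    also have "\<dots> \<le> real c ^ 2 * (\<theta> * n)"
    proof -
      have "card ((F \<times> F) - {p. fst p = snd p}) \<le> card (F \<times> F)"
        using Ffin by (intro card_mono) auto
      also have "\<dots> = card F * card F" by (simp add: card_cartesian_product)
      also have "\<dots> \<le> c * c" using fam_le[OF Fm] by (intro mult_mono) auto
      finally have "real (card ((F \<times> F) - {p. fst p = snd p})) \<le> real c ^ 2"
        by (simp add: power2_eq_square flip: of_nat_mult)
      moreover have "\<theta> * n \<ge> 0" using \<theta>pos unfolding n_def by simp
      ultimately show ?thesis by (intro mult_right_mono) auto
    qed
    finally show ?thesis by (simp add: mult.assoc)
  qed
  have Lfin: "finite L" unfolding L_def using fin by simp
  have assign: "\<exists>v\<in>F. real (card (N m u \<inter> Core v)) \<ge> \<theta> * n + 1" if "u \<in> L" for u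
  proof (rule ccontr)
    assume "\<not> ?thesis"
    then have lt: "\<forall>v\<in>F. real (card (N m u \<inter> Core v)) < \<theta> * n + 1" by auto
    have uV: "u \<in> V" using that unfolding L_def by auto
    have "N m u \<subseteq> L \<union> (\<Union>v\<in>F. N m u \<inter> Core v)" unfolding L_def N_def by auto
    then have "card (N m u) \<le> card (L \<union> (\<Union>v\<in>F. N m u \<inter> Core v))"
      using Lfin Ffin Nfin by (intro card_mono) auto
    also have "\<dots> \<le> card L + card (\<Union>v\<in>F. N m u \<inter> Core v)" by (rule card_Un_le)
    also have "card (\<Union>v\<in>F. N m u \<inter> Core v) \<le> (\<Sum>v\<in>F. card (N m u \<inter> Core v))"
      by (rule card_UN_le[OF Ffin])
    finally have A: "real (card (N m u)) \<le> real (card L) + (\<Sum>v\<in>F. real (card (N m u \<inter> Core v)))"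
      by (simp flip: of_nat_sum)
    have "(\<Sum>v\<in>F. real (card (N m u \<inter> Core v))) \<le> (\<Sum>v\<in>F. \<theta> * n + 1)"
      using lt by (intro sum_mono) (auto intro: less_imp_le)
    also have "\<dots> = real (card F) * (\<theta> * n + 1)" by simp
    also have "\<dots> \<le> real c * (\<theta> * n + 1)"
    proof -
      have "card F \<le> c" using fam_le[OF Fm] by simp
      moreover have "\<theta> * n + 1 \<ge> 0" using \<theta>pos unfolding n_def by simp
      ultimately show ?thesis by (intro mult_right_mono) auto
    qed
    finally have "\<delta>0 * n \<le> real c ^ 2 * \<theta> * n + real c * \<theta> * n + real c"
      using A L_small Nbig[OF uV] by (simp add: algebra_simps)
    moreover have "real c ^ 2 * \<theta> * n \<le> \<delta>0 / 4 * n"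
    proof -
      have "real c ^ 2 * \<theta> \<le> \<delta>0 / 4" using \<theta>le by (simp add: algebra_simps)
      then show ?thesis unfolding n_def by (intro mult_right_mono) auto
    qed
    moreover have "real c * \<theta> * n \<le> \<delta>0 / 4 * n"
    proof -
      have "real c \<ge> 1" using c2 by simp
      then have "real c \<le> real c ^ 2" by (simp add: power2_eq_square)
      then have "real c * \<theta> \<le> real c ^ 2 * \<theta>" using \<theta>pos by (intro mult_right_mono) auto
      then have "real c * \<theta> \<le> \<delta>0 / 4" using \<theta>le by (simp add: algebra_simps)
      then show ?thesis unfolding n_def by (intro mult_right_mono) auto
    qed
    ultimately have "\<delta>0 * n \<le> \<delta>0 / 2 * n + real c" by linarith
    then have "\<delta>0 * n \<le> 2 * real c" by linarith
    then show False using nbig unfolding n_def by (simp add: mult.commute)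
  qed
  define \<sigma> where "\<sigma> u = (SOME v. v \<in> F \<and> real (card (N m u \<inter> Core v)) \<ge> \<theta> * n + 1)" for u
  have \<sigma>: "\<sigma> u \<in> F \<and> real (card (N m u \<inter> Core (\<sigma> u))) \<ge> \<theta> * n + 1" if "u \<in> L" for u
    unfolding \<sigma>_def using someI_ex[OF assign[OF that, unfolded Bex_def]] .
  have LC: "R (Suc m) u w" if "u \<in> L" "w \<in> Core (\<sigma> u)" for u w
  proof -
    let ?v = "\<sigma> u"
    have vF: "?v \<in> F" using \<sigma>[OF that(1)] by blast
    have uV: "u \<in> V" using that unfolding L_def by auto
    have wV: "w \<in> V" using that unfolding Core_def by auto
    have uw: "u \<noteq> w" using that vF unfolding L_def by auto
    have sub: "(N m u \<inter> Core ?v) - {w} \<subseteq> {z\<in>V. R m u z \<and> R m z w}"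
      using core_closed[OF vF _ that(2)] sym unfolding N_def by blast
    have "real (card (N m u \<inter> Core ?v)) - 1 \<le> real (card ((N m u \<inter> Core ?v) - {w}))"
      by (rule card_minus_one_le) (use Nfin in simp)
    also have "\<dots> \<le> real (card {z\<in>V. R m u z \<and> R m z w})"
      using sub fin by (simp add: card_mono)
    finally have "real (card {z\<in>V. R m u z \<and> R m z w}) \<ge> \<theta> * real (card V)"
      using \<sigma>[OF that(1)] unfolding n_def by linarith
    then show ?thesis using P3[of m u w] m(1) uV wV uw by simp
  qed
  have LL: "R (Suc (Suc m)) u w" if "u \<in> L" "w \<in> L" "\<sigma> u = \<sigma> w" "u \<noteq> w" for u w
  proof -
    let ?v = "\<sigma> u"
    have uV: "u \<in> V" and wV: "w \<in> V" using that unfolding L_def by auto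
    have sub: "N m u \<inter> Core ?v \<subseteq> {z\<in>V. R (Suc m) u z \<and> R (Suc m) z w}"
    proof
      fix z assume z: "z \<in> N m u \<inter> Core ?v"
      then have "R (Suc m) w z" using LC[OF that(2)] that(3) by simp
      then show "z \<in> {z\<in>V. R (Suc m) u z \<and> R (Suc m) z w}"
        using z mono sym unfolding N_def by blast
    qed
    have "real (card (N m u \<inter> Core ?v)) \<le> real (card {z\<in>V. R (Suc m) u z \<and> R (Suc m) z w})"
      using sub fin by (simp add: card_mono)
    then have "real (card {z\<in>V. R (Suc m) u z \<and> R (Suc m) z w}) \<ge> \<theta> * real (card V)"
      using \<sigma>[OF that(1)] unfolding n_def by linarith
    then show ?thesis using P3[of "Suc m" u w] m(1) uV wV that(4) by simp
  qed
  define Part where "Part v = Core v \<union> {u\<in>L. \<sigma> u = v}" for v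
  define P where "P = Part ` F"
  have partV: "Part v \<subseteq> V" for v unfolding Part_def Core_def L_def by auto
  have part_disj: "Part v \<inter> Part v' = {}" if "v \<in> F" "v' \<in> F" "v \<noteq> v'" for v v'
    using core_disj[OF that] that unfolding Part_def L_def by auto
  have "partition_on V P"
    unfolding partition_on_def
  proof (intro conjI)
    show "\<Union> P = V"
    proof
      show "\<Union> P \<subseteq> V" unfolding P_def using partV by blast
    next
      show "V \<subseteq> \<Union> P"
      proof
        fix u assume uV: "u \<in> V"
        show "u \<in> \<Union> P"
        proof (cases "u \<in> L")
          case True
          then show ?thesis using \<sigma>[OF True] unfolding P_def Part_def by blast
        next
          case False
          then obtain v where "v \<in> F" "u \<in> Core v" using uV unfolding L_def by blast
          then show ?thesis unfolding P_def Part_def by blast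
        qed
      qed
    qed
  next
    show "disjoint P" unfolding disjoint_def P_def using part_disj by blast
  next
    show "{} \<notin> P" unfolding P_def Part_def using v_in_Core by blast
  qed
  moreover have "card P \<le> c - 1"
  proof -
    have "card P \<le> card F" unfolding P_def using Ffin by (rule card_image_le)
    then show ?thesis using fam_le[OF Fm] by simp
  qed
  moreover have "\<forall>X\<in>P. (\<forall>x\<in>X. \<forall>y\<in>X. x \<noteq> y \<longrightarrow> R c x y) \<and> real (card X) \<ge> \<delta>0 / 2 * real (card V)"
  proof
    fix X assume "X \<in> P"
    then obtain v where vF: "v \<in> F" and X: "X = Part v" unfolding P_def by blast
    have "card (Core v) \<le> card X" unfolding X Part_def using Core_fin Lfin by (intro card_mono) auto
    then have size: "real (card X) \<ge> \<delta>0 / 2 * real (card V)" using core_big[OF vF] unfolding n_def by linarith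
    have cl: "R c x y" if "x \<in> X" "y \<in> X" "x \<noteq> y" for x y
    proof -
      have lvl: "\<exists>l\<le>Suc (Suc m). R l x y"
      proof (cases "x \<in> Core v")
        case xc: True
        show ?thesis
        proof (cases "y \<in> Core v")
          case True
          have "R m x y" using core_closed[OF vF True xc] that(3) by auto
          then show ?thesis by (intro exI[of _ m]) auto
        next
          case False
          then have "y \<in> L" "\<sigma> y = v" using that X unfolding Part_def by auto
          then have "R (Suc m) y x" using LC[of y x] xc by simp
          then have "R (Suc m) x y" by (rule sym)
          then show ?thesis by (intro exI[of _ "Suc m"]) auto
        qed
      next
        case xn: False
        then have xL: "x \<in> L" "\<sigma> x = v" using that X unfolding Part_def by auto
        show ?thesis
        proof (cases "y \<in> Core v")
          case True
          then have "R (Suc m) x y" using LC[OF xL(1)] xL(2) by simp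
          then show ?thesis by (intro exI[of _ "Suc m"]) auto
        next
          case False
          then have "y \<in> L" "\<sigma> y = v" using that X unfolding Part_def by auto
          then have "R (Suc (Suc m)) x y" using LL[OF xL(1)] xL(2) that(3) by simp
          then show ?thesis by (intro exI[of _ "Suc (Suc m)"]) auto
        qed
      qed
      then obtain l where "l \<le> Suc (Suc m)" "R l x y" by blast
      moreover have "Suc (Suc m) \<le> c" using m(1) by simp
      ultimately show ?thesis using monoN[of l c x y] by simp
    qed
    show "(\<forall>x\<in>X. \<forall>y\<in>X. x \<noteq> y \<longrightarrow> R c x y) \<and> real (card X) \<ge> \<delta>0 / 2 * real (card V)"
      using cl size by blast
  qed
  ultimately show ?thesis by blast
qed

lemma pv_J[simp]: "J j \<in> path_verts k q s \<longleftrightarrow> j \<le> s"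
  unfolding path_verts_def by auto
lemma pv_A[simp]: "A i a \<in> path_verts k q s \<longleftrightarrow> i < s \<and> a < k"
  unfolding path_verts_def by auto
lemma pv_B[simp]: "B i b \<in> path_verts k q s \<longleftrightarrow> i < s \<and> b < q - 1"
  unfolding path_verts_def by auto

lemma pv_eq: "path_verts k q s = J ` {..s} \<union> (\<lambda>(i,a). A i a) ` ({..<s} \<times> {..<k}) \<union> (\<lambda>(i,b). B i b) ` ({..<s} \<times> {..<q - 1})"
  unfolding path_verts_def by auto

lemma pv_fin[simp]: "finite (path_verts k q s)"
  unfolding pv_eq by auto

lemma pv_card: "card (path_verts k q s) = Suc s + s * k + s * (q - 1)"
proof -
  have i1: "inj_on J {..s}" by (auto simp: inj_on_def)
  have i2: "inj_on (\<lambda>(i,a). A i a) ({..<s} \<times> {..<k})" by (auto simp: inj_on_def)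
  have i3: "inj_on (\<lambda>(i,b). B i b) ({..<s} \<times> {..<q - 1})" by (auto simp: inj_on_def)
  have "card (J ` {..s} \<union> (\<lambda>(i,a). A i a) ` ({..<s} \<times> {..<k}) \<union> (\<lambda>(i,b). B i b) ` ({..<s} \<times> {..<q - 1}))
      = card (J ` {..s} \<union> (\<lambda>(i,a). A i a) ` ({..<s} \<times> {..<k})) + card ((\<lambda>(i,b). B i b) ` ({..<s} \<times> {..<q - 1}))"
    by (rule card_Un_disjoint) auto
  also have "card (J ` {..s} \<union> (\<lambda>(i,a). A i a) ` ({..<s} \<times> {..<k})) = card (J ` {..s}) + card ((\<lambda>(i,a). A i a) ` ({..<s} \<times> {..<k}))"
    by (rule card_Un_disjoint) auto
  finally show ?thesis unfolding pv_eq using i1 i2 i3 by (simp add: card_image card_cartesian_product)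
qed

lemma pv_card': "q \<ge> 1 \<Longrightarrow> card (path_verts k q s) = s * (k + q) + 1"
  unfolding pv_card by (cases q) (auto simp: algebra_simps)

lemma path_edge_iff: "path_edge u v \<longleftrightarrow>
   (\<exists>i a. u = A i a \<and> (v = J i \<or> v = J (Suc i) \<or> (\<exists>b. v = B i b))) \<or>
   (\<exists>i a. v = A i a \<and> (u = J i \<or> u = J (Suc i) \<or> (\<exists>b. u = B i b)))"
  unfolding path_edge_def path_edge_dir_def by blast

definition emb :: "nat \<Rightarrow> nat \<Rightarrow> nat \<Rightarrow> 'a set \<Rightarrow> ('a \<Rightarrow> 'a \<Rightarrow> bool) \<Rightarrow> (pvert \<Rightarrow> 'a) set" where
  "emb k q s V E = {f \<in> extensional_funcset (path_verts k q s) V. inj_on f (path_verts k q s) \<and>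
        (\<forall>u\<in>path_verts k q s. \<forall>v\<in>path_verts k q s. path_edge u v \<longrightarrow> E (f u) (f v))}"

definition ore :: "nat \<Rightarrow> nat \<Rightarrow> nat \<Rightarrow> 'a set \<Rightarrow> ('a \<Rightarrow> 'a \<Rightarrow> bool) \<Rightarrow> 'a \<Rightarrow> 'a \<Rightarrow> (pvert \<Rightarrow> 'a) set" where
  "ore k q s V E x y = {f \<in> emb k q s V E. f (J 0) = x \<and> f (J s) = y}"

lemma path_embeddings_ore: "path_embeddings k q s V E x y = ore k q s V E x y \<union> ore k q s V E y x"
  unfolding path_embeddings_def ore_def emb_def by (auto simp: doubleton_eq_iff)

lemma ore_sub: "ore k q s V E x y \<subseteq> extensional_funcset (path_verts k q s) V"
  unfolding ore_def emb_def by auto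

lemma ore_fin: "finite V \<Longrightarrow> finite (ore k q s V E x y)"
  by (rule finite_subset[OF ore_sub]) (simp add: finite_PiE)

lemma card_fix:
  assumes "finite Q" "F \<subseteq> Q" "\<And>i. i \<in> F \<Longrightarrow> h i \<in> V"
  shows "card {g \<in> Pi\<^sub>E Q (\<lambda>_. V). \<forall>i\<in>F. g i = h i} = card V ^ (card Q - card F)"
proof -
  have "{g \<in> Pi\<^sub>E Q (\<lambda>_. V). \<forall>i\<in>F. g i = h i} = Pi\<^sub>E Q (\<lambda>i. if i \<in> F then {h i} else V)"
    using assms(2,3) by (auto simp: PiE_iff extensional_def split: if_splits)
  moreover have "card (Pi\<^sub>E Q (\<lambda>i. if i \<in> F then {h i} else V)) = (\<Prod>i\<in>Q. card (if i \<in> F then {h i} else V))"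
    using assms(1) by (rule card_PiE)
  moreover have "(\<Prod>i\<in>Q. card (if i \<in> F then {h i} else V)) = card V ^ (card Q - card F)"
  proof -
    have "(\<Prod>i\<in>Q. card (if i \<in> F then {h i} else V)) = (\<Prod>i\<in>Q. if i \<in> F then 1 else card V)"
      by (rule prod.cong) auto
    also have "\<dots> = (\<Prod>i\<in>Q \<inter> F. 1) * (\<Prod>i\<in>Q - F. card V)"
      using assms(1) by (simp add: prod.If_cases Diff_eq)
    also have "\<dots> = card V ^ card (Q - F)" by simp
    also have "card (Q - F) = card Q - card F" using assms(1,2) by (meson card_Diff_subset finite_subset)
    finally show ?thesis .
  qed
  ultimately show ?thesis by simp
qed

lemma card_fix2:
  assumes "finite Q" "e1 \<in> Q" "e2 \<in> Q" "e1 \<noteq> e2" "x \<in> V" "y \<in> V"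
  shows "card {g \<in> Pi\<^sub>E Q (\<lambda>_. V). g e1 = x \<and> g e2 = y} = card V ^ (card Q - 2)"
proof -
  have "{g \<in> Pi\<^sub>E Q (\<lambda>_. V). g e1 = x \<and> g e2 = y} = {g \<in> Pi\<^sub>E Q (\<lambda>_. V). \<forall>i\<in>{e1,e2}. g i = (if i = e1 then x else y)}"
    using assms(4) by auto
  also have "card \<dots> = card V ^ (card Q - card {e1, e2})"
    using assms by (intro card_fix) auto
  finally show ?thesis using assms(4) by (simp add: numeral_2_eq_2)
qed

lemma card_same_le:
  assumes "finite Q" "e1 \<in> Q" "e2 \<in> Q" "e1 \<noteq> e2" "x \<in> V" "y \<in> V" "x \<noteq> y"
    and "p \<in> Q" "p' \<in> Q" "p \<noteq> p'" "finite V"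
  shows "card {g \<in> Pi\<^sub>E Q (\<lambda>_. V). g e1 = x \<and> g e2 = y \<and> g p = g p'} \<le> card V ^ (card Q - 3)"
proof -
  have main: "card {g \<in> Pi\<^sub>E Q (\<lambda>_. V). g e1 = x \<and> g e2 = y \<and> g p = g p'} \<le> card V ^ (card Q - 3)"
    if "p \<in> Q" "p' \<in> Q" "p \<noteq> p'" "p \<noteq> e1" "p \<noteq> e2" for p p'
  proof -
    let ?S = "{g \<in> Pi\<^sub>E Q (\<lambda>_. V). g e1 = x \<and> g e2 = y \<and> g p = g p'}"
    let ?T = "{g \<in> Pi\<^sub>E (Q - {p}) (\<lambda>_. V). g e1 = x \<and> g e2 = y}"
    have inj: "inj_on (\<lambda>g. restrict g (Q - {p})) ?S"
    proof (rule inj_onI)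
      fix g1 g2 assume g1: "g1 \<in> ?S" and g2: "g2 \<in> ?S" and eq: "restrict g1 (Q - {p}) = restrict g2 (Q - {p})"
      have a: "g1 i = g2 i" if "i \<in> Q - {p}" for i using eq that by (metis restrict_apply')
      have b: "g1 p = g2 p" using g1 g2 a[of p'] that by auto
      show "g1 = g2"
      proof (rule PiE_ext[of _ Q "\<lambda>_. V"])
        show "g1 \<in> Pi\<^sub>E Q (\<lambda>_. V)" "g2 \<in> Pi\<^sub>E Q (\<lambda>_. V)" using g1 g2 by auto
        fix i assume "i \<in> Q" then show "g1 i = g2 i" using a b by (cases "i = p") auto
      qed
    qed
    have im: "(\<lambda>g. restrict g (Q - {p})) ` ?S \<subseteq> ?T"
      using that assms by (auto simp: PiE_iff split: if_splits)
    have "card ?S \<le> card ?T"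
      using card_inj_on_le[OF inj im] assms(1,11) by (simp add: finite_PiE)
    also have "card ?T = card V ^ (card (Q - {p}) - 2)"
      using assms that by (intro card_fix2) auto
    also have "card (Q - {p}) - 2 = card Q - 3" using that assms(1) by simp
    finally show ?thesis .
  qed
  show ?thesis
  proof (cases "p \<noteq> e1 \<and> p \<noteq> e2")
    case True then show ?thesis using main assms by blast
  next
    case False
    show ?thesis
    proof (cases "p' \<noteq> e1 \<and> p' \<noteq> e2")
      case True
      have "{g \<in> Pi\<^sub>E Q (\<lambda>_. V). g e1 = x \<and> g e2 = y \<and> g p = g p'} = {g \<in> Pi\<^sub>E Q (\<lambda>_. V). g e1 = x \<and> g e2 = y \<and> g p' = g p}"
        by auto
      then show ?thesis using main[of p' p] True assms by simp
    next
      case False2: False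
      have emp: "{g \<in> Pi\<^sub>E Q (\<lambda>_. V). g e1 = x \<and> g e2 = y \<and> g p = g p'} = {}"
        using False False2 assms by auto
      show ?thesis by (simp only: emp card.empty)
    qed
  qed
qed

lemma card_noninj_le:
  assumes "finite Q" "e1 \<in> Q" "e2 \<in> Q" "e1 \<noteq> e2" "x \<in> V" "y \<in> V" "x \<noteq> y" "finite V"
  shows "card {g \<in> Pi\<^sub>E Q (\<lambda>_. V). g e1 = x \<and> g e2 = y \<and> \<not> inj_on g Q} \<le> card Q ^ 2 * card V ^ (card Q - 3)"
proof -
  let ?D = "(Q \<times> Q) - {pp. fst pp = snd pp}"
  let ?S = "\<lambda>pp. {g \<in> Pi\<^sub>E Q (\<lambda>_. V). g e1 = x \<and> g e2 = y \<and> g (fst pp) = g (snd pp)}"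
  have "{g \<in> Pi\<^sub>E Q (\<lambda>_. V). g e1 = x \<and> g e2 = y \<and> \<not> inj_on g Q} \<subseteq> (\<Union>pp\<in>?D. ?S pp)"
  proof
    fix g assume g: "g \<in> {g \<in> Pi\<^sub>E Q (\<lambda>_. V). g e1 = x \<and> g e2 = y \<and> \<not> inj_on g Q}"
    then obtain p p' where pp: "p \<in> Q" "p' \<in> Q" "g p = g p'" "p \<noteq> p'" unfolding inj_on_def by blast
    show "g \<in> (\<Union>pp\<in>?D. ?S pp)" using g pp by (intro UN_I[of "(p, p')"]) auto
  qed
  then have "card {g \<in> Pi\<^sub>E Q (\<lambda>_. V). g e1 = x \<and> g e2 = y \<and> \<not> inj_on g Q} \<le> card (\<Union>pp\<in>?D. ?S pp)"
    using assms(1,8) by (intro card_mono) (auto simp: finite_PiE)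
  also have "\<dots> \<le> (\<Sum>pp\<in>?D. card (?S pp))" using assms(1) by (intro card_UN_le) auto
  also have "\<dots> \<le> (\<Sum>pp\<in>?D. card V ^ (card Q - 3))"
    using assms by (intro sum_mono card_same_le) auto
  also have "\<dots> = card ?D * card V ^ (card Q - 3)" by simp
  also have "\<dots> \<le> card (Q \<times> Q) * card V ^ (card Q - 3)"
    using assms(1) by (intro mult_right_mono card_mono) auto
  also have "\<dots> = card Q ^ 2 * card V ^ (card Q - 3)" by (simp add: card_cartesian_product power2_eq_square)
  finally show ?thesis .
qed

lemma count_scheme:
  assumes "finite Q" "e1 \<in> Q" "e2 \<in> Q" "e1 \<noteq> e2" "x \<in> V" "y \<in> V" "x \<noteq> y" "finite V"
    and "T \<subseteq> {g \<in> Pi\<^sub>E Q (\<lambda>_. V). g e1 = x \<and> g e2 = y}"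
    and "\<And>g. g \<in> T \<Longrightarrow> inj_on g Q \<Longrightarrow> g \<in> X" and "finite X"
  shows "real (card T) \<le> real (card X) + real (card Q) ^ 2 * real (card V) ^ (card Q - 3)"
proof -
  have "T \<subseteq> X \<union> {g \<in> Pi\<^sub>E Q (\<lambda>_. V). g e1 = x \<and> g e2 = y \<and> \<not> inj_on g Q}"
    using assms(9,10) by blast
  then have "card T \<le> card (X \<union> {g \<in> Pi\<^sub>E Q (\<lambda>_. V). g e1 = x \<and> g e2 = y \<and> \<not> inj_on g Q})"
    using assms by (intro card_mono) (auto simp: finite_PiE)
  also have "\<dots> \<le> card X + card {g \<in> Pi\<^sub>E Q (\<lambda>_. V). g e1 = x \<and> g e2 = y \<and> \<not> inj_on g Q}"
    by (rule card_Un_le)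
  also have "\<dots> \<le> card X + card Q ^ 2 * card V ^ (card Q - 3)"
    using card_noninj_le[OF assms(1-8)] by simp
  finally show ?thesis by (simp flip: of_nat_power of_nat_mult of_nat_add)
qed

definition rv :: "nat \<Rightarrow> pvert \<Rightarrow> pvert" where
  "rv s p = (case p of J j \<Rightarrow> J (s - j) | A i a \<Rightarrow> A (s - Suc i) a | B i b \<Rightarrow> B (s - Suc i) b)"

lemma rv_in: "p \<in> path_verts k q s \<Longrightarrow> rv s p \<in> path_verts k q s"
  unfolding rv_def by (cases p) auto

lemma rv_rv: "p \<in> path_verts k q s \<Longrightarrow> rv s (rv s p) = p"
  unfolding rv_def by (cases p) auto

lemma rv_dir:
  assumes u: "u \<in> path_verts k q s" and d: "path_edge_dir u v"
  shows "path_edge_dir (rv s u) (rv s v)"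
proof -
  obtain i a where ua: "u = A i a" and v: "v = J i \<or> v = J (Suc i) \<or> (\<exists>b. v = B i b)"
    using d unfolding path_edge_dir_def by blast
  have i_s: "i < s" using u ua by simp
  then have e: "s - i = Suc (s - Suc i)" by simp
  have ru: "rv s u = A (s - Suc i) a" unfolding ua rv_def by simp
  from v show ?thesis
  proof (elim disjE)
    assume "v = J i"
    then have "rv s v = J (Suc (s - Suc i))" unfolding rv_def using e by simp
    then show ?thesis unfolding ru path_edge_dir_def by blast
  next
    assume "v = J (Suc i)"
    then have "rv s v = J (s - Suc i)" unfolding rv_def by simp
    then show ?thesis unfolding ru path_edge_dir_def by blast
  next
    assume "\<exists>b. v = B i b"
    then obtain b where "v = B i b" by blast
    then have "rv s v = B (s - Suc i) b" unfolding rv_def by simp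
    then show ?thesis unfolding ru path_edge_dir_def by blast
  qed
qed

lemma rv_edge: "u \<in> path_verts k q s \<Longrightarrow> v \<in> path_verts k q s \<Longrightarrow> path_edge u v \<Longrightarrow> path_edge (rv s u) (rv s v)"
  unfolding path_edge_def using rv_dir by blast

lemma card_ore_rev: "card (ore k q s V E x y) \<le> card (ore k q s V E y x)" if "finite V"
proof -
  let ?P = "path_verts k q s"
  let ?m = "\<lambda>f. restrict (f \<circ> rv s) ?P"
  have inj: "inj_on ?m (ore k q s V E x y)"
  proof (rule inj_onI)
    fix f g assume f: "f \<in> ore k q s V E x y" and g: "g \<in> ore k q s V E x y" and eq: "?m f = ?m g"
    show "f = g"
    proof (rule PiE_ext[of _ ?P "\<lambda>_. V"])
      show "f \<in> Pi\<^sub>E ?P (\<lambda>_. V)" using subsetD[OF ore_sub f] .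
      show "g \<in> Pi\<^sub>E ?P (\<lambda>_. V)" using subsetD[OF ore_sub g] .
      fix p assume p: "p \<in> ?P"
      have "?m f (rv s p) = ?m g (rv s p)" using eq by simp
      then show "f p = g p" using p rv_in[OF p] rv_rv[OF p] by simp
    qed
  qed
  have im: "?m ` ore k q s V E x y \<subseteq> ore k q s V E y x"
  proof
    fix h assume "h \<in> ?m ` ore k q s V E x y"
    then obtain f where f: "f \<in> ore k q s V E x y" and h: "h = ?m f" by blast
    have fP: "f \<in> extensional_funcset ?P V" and finj: "inj_on f ?P"
      and fe: "\<forall>u\<in>?P. \<forall>v\<in>?P. path_edge u v \<longrightarrow> E (f u) (f v)" and f0: "f (J 0) = x" and fs: "f (J s) = y"
      using f unfolding ore_def emb_def by auto
    have "h \<in> extensional_funcset ?P V"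
    proof -
      have "\<forall>p\<in>?P. f (rv s p) \<in> V" using fP rv_in by (auto simp: PiE_iff)
      then show ?thesis unfolding h by (auto simp: PiE_iff)
    qed
    moreover have "inj_on h ?P"
    proof (rule inj_onI)
      fix u v assume u: "u \<in> ?P" and v: "v \<in> ?P" and "h u = h v"
      then have "f (rv s u) = f (rv s v)" unfolding h by simp
      moreover have "rv s u \<in> ?P" "rv s v \<in> ?P" using rv_in u v by auto
      ultimately have "rv s u = rv s v" using finj by (meson inj_onD)
      then have "rv s (rv s u) = rv s (rv s v)" by simp
      then show "u = v" using rv_rv[OF u] rv_rv[OF v] by simp
    qed
    moreover have "\<forall>u\<in>?P. \<forall>v\<in>?P. path_edge u v \<longrightarrow> E (h u) (h v)"
    proof (intro ballI impI)
      fix u v assume u: "u \<in> ?P" and v: "v \<in> ?P" and e: "path_edge u v"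
      have "E (f (rv s u)) (f (rv s v))" using fe rv_in[OF u] rv_in[OF v] rv_edge[OF u v e] by blast
      then show "E (h u) (h v)" unfolding h using u v by simp
    qed
    moreover have "h (J 0) = y" "h (J s) = x" unfolding h using f0 fs by (auto simp: rv_def)
    ultimately show "h \<in> ore k q s V E y x" unfolding ore_def emb_def by auto
  qed
  show ?thesis using card_inj_on_le[OF inj im] ore_fin[OF that] by simp
qed

lemma card_pe_le: "finite V \<Longrightarrow> card (path_embeddings k q s V E x y) \<le> 2 * card (ore k q s V E x y)"
proof -
  assume fin: "finite V"
  have "card (path_embeddings k q s V E x y) \<le> card (ore k q s V E x y) + card (ore k q s V E y x)"
    unfolding path_embeddings_ore by (rule card_Un_le)
  then show ?thesis using card_ore_rev[OF fin, of k q s E y x] by simp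
qed

definition shiftv :: "nat \<Rightarrow> pvert \<Rightarrow> pvert" where
  "shiftv s1 p = (case p of J j \<Rightarrow> J (s1 + j) | A i a \<Rightarrow> A (s1 + i) a | B i b \<Rightarrow> B (s1 + i) b)"

definition gl :: "nat \<Rightarrow> (pvert \<Rightarrow> 'a) \<Rightarrow> (pvert \<Rightarrow> 'a) \<Rightarrow> pvert \<Rightarrow> 'a" where
  "gl s1 f1 f2 p = (case p of J j \<Rightarrow> if j \<le> s1 then f1 (J j) else f2 (J (j - s1))
      | A i a \<Rightarrow> if i < s1 then f1 (A i a) else f2 (A (i - s1) a)
      | B i b \<Rightarrow> if i < s1 then f1 (B i b) else f2 (B (i - s1) b))"

lemma P1_sub: "p \<in> path_verts k q s1 \<Longrightarrow> p \<in> path_verts k q (s1 + s2)"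
  by (cases p) auto

lemma shift_in: "p \<in> path_verts k q s2 \<Longrightarrow> shiftv s1 p \<in> path_verts k q (s1 + s2)"
  unfolding shiftv_def by (cases p) auto

lemma gl_left: "p \<in> path_verts k q s1 \<Longrightarrow> gl s1 f1 f2 p = f1 p"
  unfolding gl_def by (cases p) auto

lemma gl_right: "f1 (J s1) = f2 (J 0) \<Longrightarrow> p \<in> path_verts k q s2 \<Longrightarrow> gl s1 f1 f2 (shiftv s1 p) = f2 p"
  unfolding gl_def shiftv_def by (cases p) auto

lemma cover_split: "p \<in> path_verts k q (s1 + s2) \<Longrightarrow>
   p \<in> path_verts k q s1 \<or> (\<exists>p'\<in>path_verts k q s2. p = shiftv s1 p')"
proof (cases p)
  case (J j)
  assume "p \<in> path_verts k q (s1 + s2)"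
  then show ?thesis using J
    by (cases "j \<le> s1") (auto simp: shiftv_def intro!: bexI[of _ "J (j - s1)"])
next
  case (A i a)
  assume "p \<in> path_verts k q (s1 + s2)"
  then show ?thesis using A
    by (cases "i < s1") (auto simp: shiftv_def intro!: bexI[of _ "A (i - s1) a"])
next
  case (B i b)
  assume "p \<in> path_verts k q (s1 + s2)"
  then show ?thesis using B
    by (cases "i < s1") (auto simp: shiftv_def intro!: bexI[of _ "B (i - s1) b"])
qed

lemma dir_split:
  assumes u: "u \<in> path_verts k q (s1 + s2)" and v: "v \<in> path_verts k q (s1 + s2)" and d: "path_edge_dir u v"
  shows "(u \<in> path_verts k q s1 \<and> v \<in> path_verts k q s1) \<or>
    (\<exists>u'\<in>path_verts k q s2. \<exists>v'\<in>path_verts k q s2. u = shiftv s1 u' \<and> v = shiftv s1 v' \<and> path_edge_dir u' v')"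
proof -
  obtain i a where ua: "u = A i a" and vv: "v = J i \<or> v = J (Suc i) \<or> (\<exists>b. v = B i b)"
    using d unfolding path_edge_dir_def by blast
  show ?thesis
  proof (cases "i < s1")
    case True
    then show ?thesis using u v ua vv by auto
  next
    case False
    define i' where "i' = i - s1"
    have ii: "i = s1 + i'" using False i'_def by simp
    have u': "A i' a \<in> path_verts k q s2" "u = shiftv s1 (A i' a)" using u ua ii by (auto simp: shiftv_def)
    from vv show ?thesis
    proof (elim disjE)
      assume "v = J i"
      then show ?thesis using u' ii v
        by (intro disjI2 bexI[of _ "A i' a"] bexI[of _ "J i'"]) (auto simp: shiftv_def path_edge_dir_def)
    next
      assume "v = J (Suc i)"
      then show ?thesis using u' ii v
        by (intro disjI2 bexI[of _ "A i' a"] bexI[of _ "J (Suc i')"]) (auto simp: shiftv_def path_edge_dir_def)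
    next
      assume "\<exists>b. v = B i b"
      then obtain b where "v = B i b" by blast
      then show ?thesis using u' ii v
        by (intro disjI2 bexI[of _ "A i' a"] bexI[of _ "B i' b"]) (auto simp: shiftv_def path_edge_dir_def)
    qed
  qed
qed

lemma edge_split:
  assumes u: "u \<in> path_verts k q (s1 + s2)" and v: "v \<in> path_verts k q (s1 + s2)" and e: "path_edge u v"
  shows "(u \<in> path_verts k q s1 \<and> v \<in> path_verts k q s1) \<or>
    (\<exists>u'\<in>path_verts k q s2. \<exists>v'\<in>path_verts k q s2. u = shiftv s1 u' \<and> v = shiftv s1 v' \<and> path_edge u' v')"
proof -
  from e have "path_edge_dir u v \<or> path_edge_dir v u" unfolding path_edge_def .
  then show ?thesis
  proof
    assume "path_edge_dir u v"
    from dir_split[OF u v this] show ?thesis unfolding path_edge_def by blast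
  next
    assume "path_edge_dir v u"
    from dir_split[OF v u this] show ?thesis unfolding path_edge_def by blast
  qed
qed

lemma aux_sub: "(X::nat) \<ge> 1 \<Longrightarrow> Y \<ge> 1 \<Longrightarrow> X + Y - 1 = (X - 1) + (Y - 1) + 1" by simp

lemma concat:
  fixes b \<theta> :: real
  assumes fin: "finite V" and xV: "x \<in> V" and yV: "y \<in> V" and xy: "x \<noteq> y" and q1: "q \<ge> 1"
    and s1: "s1 \<ge> 1" and s2: "s2 \<ge> 1" and ZV: "Z \<subseteq> V"
    and lb1: "\<And>z. z \<in> Z \<Longrightarrow> real (card (ore k q s1 V E x z)) \<ge> b * real (card V) ^ (s1 * (k + q) - 1)"
    and lb2: "\<And>z. z \<in> Z \<Longrightarrow> real (card (ore k q s2 V E z y)) \<ge> b * real (card V) ^ (s2 * (k + q) - 1)"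
    and Zc: "real (card Z) \<ge> \<theta> * real (card V)" and b0: "b \<ge> 0" and th0: "\<theta> \<ge> 0"
    and nb: "real (card (path_verts k q (s1 + s2))) ^ 2 \<le> \<theta> * b ^ 2 / 2 * real (card V)"
  shows "real (card (ore k q (s1 + s2) V E x y)) \<ge> \<theta> * b ^ 2 / 2 * real (card V) ^ ((s1 + s2) * (k + q) - 1)"
proof -
  let ?P1 = "path_verts k q s1" and ?P2 = "path_verts k q s2" and ?Q = "path_verts k q (s1 + s2)"
  let ?n = "real (card V)"
  define N1 where "N1 = s1 * (k + q) - 1"
  define N2 where "N2 = s2 * (k + q) - 1"
  define N where "N = (s1 + s2) * (k + q) - 1"
  have X1: "s1 * (k + q) \<ge> 1" using s1 q1 by simp
  have Y1: "s2 * (k + q) \<ge> 1" using s2 q1 by simp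
  have dist: "(s1 + s2) * (k + q) = s1 * (k + q) + s2 * (k + q)" by (rule add_mult_distrib)
  have NN: "N = N1 + N2 + 1" unfolding N_def N1_def N2_def dist using aux_sub[OF X1 Y1] .
  define Sg where "Sg = Sigma Z (\<lambda>z. ore k q s1 V E x z \<times> ore k q s2 V E z y)"
  define G where "G = (\<lambda>(z::'a, f1::pvert \<Rightarrow> 'a, f2::pvert \<Rightarrow> 'a). restrict (gl s1 f1 f2) ?Q)"
  have oreD: "f \<in> Pi\<^sub>E (path_verts k q s) (\<lambda>_. V) \<and> inj_on f (path_verts k q s) \<and>
      (\<forall>u\<in>path_verts k q s. \<forall>v\<in>path_verts k q s. path_edge u v \<longrightarrow> E (f u) (f v)) \<and> f (J 0) = a \<and> f (J s) = c"
    if "f \<in> ore k q s V E a c" for f s a c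
    using that unfolding ore_def emb_def by auto
  have Gl: "G (z, f1, f2) p = f1 p" if "p \<in> ?P1" for z f1 f2 p
    using that gl_left P1_sub unfolding G_def by simp
  have Gr: "G (z, f1, f2) (shiftv s1 p) = f2 p" if "p \<in> ?P2" "f1 (J s1) = f2 (J 0)" for z f1 f2 p
    using that gl_right shift_in unfolding G_def by simp
  have mem: "f1 \<in> ore k q s1 V E x z \<and> f2 \<in> ore k q s2 V E z y" if "w \<in> Sg" "w = (z, f1, f2)" for w z f1 f2
    using that unfolding Sg_def by auto
  have inj: "inj_on G Sg"
  proof (rule inj_onI)
    fix w w' assume w: "w \<in> Sg" and w': "w' \<in> Sg" and eq: "G w = G w'"
    obtain z f1 f2 where wz: "w = (z, f1, f2)" by (cases w) auto
    obtain z' f1' f2' where wz': "w' = (z', f1', f2')" by (cases w') auto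
    have m: "f1 \<in> ore k q s1 V E x z" "f2 \<in> ore k q s2 V E z y" using mem[OF w wz] by auto
    have m': "f1' \<in> ore k q s1 V E x z'" "f2' \<in> ore k q s2 V E z' y" using mem[OF w' wz'] by auto
    have e1: "f1 = f1'"
    proof (rule PiE_ext[of _ ?P1 "\<lambda>_. V"])
      show "f1 \<in> Pi\<^sub>E ?P1 (\<lambda>_. V)" "f1' \<in> Pi\<^sub>E ?P1 (\<lambda>_. V)" using oreD[OF m(1)] oreD[OF m'(1)] by auto
      fix p assume "p \<in> ?P1"
      then show "f1 p = f1' p" using Gl[of p] eq wz wz' by metis
    qed
    have zz: "z = z'" using oreD[OF m(1)] oreD[OF m'(1)] e1 by simp
    have e2: "f2 = f2'"
    proof (rule PiE_ext[of _ ?P2 "\<lambda>_. V"])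
      show "f2 \<in> Pi\<^sub>E ?P2 (\<lambda>_. V)" "f2' \<in> Pi\<^sub>E ?P2 (\<lambda>_. V)" using oreD[OF m(2)] oreD[OF m'(2)] by auto
      fix p assume p: "p \<in> ?P2"
      have c1: "f1 (J s1) = f2 (J 0)" using oreD[OF m(1)] oreD[OF m(2)] by simp
      have c2: "f1' (J s1) = f2' (J 0)" using oreD[OF m'(1)] oreD[OF m'(2)] by simp
      show "f2 p = f2' p" using Gr[of p f1 f2 z, OF p c1] Gr[of p f1' f2' z', OF p c2] eq wz wz' by metis
    qed
    show "w = w'" using wz wz' e1 e2 zz by simp
  qed
  have Gprops: "G w \<in> Pi\<^sub>E ?Q (\<lambda>_. V) \<and> G w (J 0) = x \<and> G w (J (s1 + s2)) = y \<and>
     (\<forall>u\<in>?Q. \<forall>v\<in>?Q. path_edge u v \<longrightarrow> E (G w u) (G w v))" if w: "w \<in> Sg" for w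
  proof -
    obtain z f1 f2 where wz: "w = (z, f1, f2)" by (cases w) auto
    have m: "f1 \<in> ore k q s1 V E x z" "f2 \<in> ore k q s2 V E z y" using mem[OF w wz] by auto
    note o1 = oreD[OF m(1)] and o2 = oreD[OF m(2)]
    have c: "f1 (J s1) = f2 (J 0)" using o1 o2 by simp
    have inV: "G w p \<in> V" if "p \<in> ?Q" for p
      using cover_split[OF that] 
    proof
      assume "p \<in> ?P1" then show ?thesis using Gl o1 wz by (auto simp: PiE_iff)
    next
      assume "\<exists>p'\<in>?P2. p = shiftv s1 p'"
      then obtain p' where "p' \<in> ?P2" "p = shiftv s1 p'" by blast
      then show ?thesis using Gr[of p' f1 f2 z] c o2 wz by (auto simp: PiE_iff)
    qed
    have "G w \<in> Pi\<^sub>E ?Q (\<lambda>_. V)" using inV unfolding G_def wz by (auto simp: PiE_iff)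
    moreover have "G w (J 0) = x" using Gl[of "J 0" z f1 f2] o1 wz by simp
    moreover have "G w (J (s1 + s2)) = y"
    proof -
      have "J (s1 + s2) = shiftv s1 (J s2)" by (simp add: shiftv_def)
      then show ?thesis using Gr[of "J s2" f1 f2 z] c o2 wz by simp
    qed
    moreover have "\<forall>u\<in>?Q. \<forall>v\<in>?Q. path_edge u v \<longrightarrow> E (G w u) (G w v)"
    proof (intro ballI impI)
      fix u v assume u: "u \<in> ?Q" and v: "v \<in> ?Q" and e: "path_edge u v"
      from edge_split[OF u v e] show "E (G w u) (G w v)"
      proof
        assume "u \<in> ?P1 \<and> v \<in> ?P1"
        then show ?thesis using Gl o1 wz e by auto
      next
        assume "\<exists>u'\<in>?P2. \<exists>v'\<in>?P2. u = shiftv s1 u' \<and> v = shiftv s1 v' \<and> path_edge u' v'"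
        then obtain u' v' where "u' \<in> ?P2" "v' \<in> ?P2" "u = shiftv s1 u'" "v = shiftv s1 v'" "path_edge u' v'"
          by blast
        then show ?thesis using Gr[of u' f1 f2 z] Gr[of v' f1 f2 z] c o2 wz by auto
      qed
    qed
    ultimately show ?thesis by blast
  qed
  define T where "T = G ` Sg"
  have Tsub: "T \<subseteq> {g \<in> Pi\<^sub>E ?Q (\<lambda>_. V). g (J 0) = x \<and> g (J (s1 + s2)) = y}"
    unfolding T_def using Gprops by blast
  have TX: "g \<in> ore k q (s1 + s2) V E x y" if "g \<in> T" "inj_on g ?Q" for g
    using that Gprops unfolding T_def ore_def emb_def by blast
  have cnt: "real (card T) \<le> real (card (ore k q (s1 + s2) V E x y)) + real (card ?Q) ^ 2 * ?n ^ (card ?Q - 3)"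
    by (rule count_scheme[OF _ _ _ _ xV yV xy fin Tsub TX]) (use s1 ore_fin[OF fin] in auto)
  have cardT: "card T = (\<Sum>z\<in>Z. card (ore k q s1 V E x z) * card (ore k q s2 V E z y))"
  proof -
    have "card T = card Sg" unfolding T_def using inj by (simp add: card_image)
    also have "card Sg = (\<Sum>z\<in>Z. card (ore k q s1 V E x z \<times> ore k q s2 V E z y))"
      unfolding Sg_def using fin ZV finite_subset ore_fin[OF fin]
      by (intro card_SigmaI) (auto intro: finite_subset)
    finally show ?thesis by (simp add: card_cartesian_product)
  qed
  have "real (card T) \<ge> (\<Sum>z\<in>Z. (b * ?n ^ N1) * (b * ?n ^ N2))"
  proof -
    have "(\<Sum>z\<in>Z. (b * ?n ^ N1) * (b * ?n ^ N2)) \<le> (\<Sum>z\<in>Z. real (card (ore k q s1 V E x z)) * real (card (ore k q s2 V E z y)))"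
      using lb1 lb2 b0 unfolding N1_def N2_def by (intro sum_mono mult_mono) auto
    then show ?thesis unfolding cardT by (simp flip: of_nat_mult)
  qed
  also have "(\<Sum>z\<in>Z. (b * ?n ^ N1) * (b * ?n ^ N2)) = real (card Z) * (b ^ 2 * ?n ^ (N1 + N2))"
    by (simp add: power_add power2_eq_square algebra_simps)
  finally have T1: "real (card T) \<ge> real (card Z) * (b ^ 2 * ?n ^ (N1 + N2))" .
  have "real (card Z) * (b ^ 2 * ?n ^ (N1 + N2)) \<ge> \<theta> * ?n * (b ^ 2 * ?n ^ (N1 + N2))"
    using Zc b0 by (intro mult_right_mono) auto
  then have T2: "real (card T) \<ge> \<theta> * b ^ 2 * ?n ^ N" using T1 unfolding NN by (simp add: algebra_simps)
  have cQ: "card ?Q = N + 2" unfolding pv_card'[OF q1] N_def dist using X1 Y1 by linarith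
  have "real (card ?Q) ^ 2 * ?n ^ (card ?Q - 3) \<le> \<theta> * b ^ 2 / 2 * ?n * ?n ^ (card ?Q - 3)"
    using nb by (intro mult_right_mono) auto
  also have "\<dots> = \<theta> * b ^ 2 / 2 * ?n ^ N"
  proof -
    have "N \<ge> 1" unfolding N_def dist using X1 Y1 by linarith
    then have "N = Suc (card ?Q - 3)" using cQ by simp
    then show ?thesis by (simp add: algebra_simps)
  qed
  finally have bad: "real (card ?Q) ^ 2 * ?n ^ (card ?Q - 3) \<le> \<theta> * b ^ 2 / 2 * ?n ^ N" .
  have "real (card (ore k q (s1 + s2) V E x y)) \<ge> \<theta> * b ^ 2 / 2 * ?n ^ N"
  proof -
    have h: "\<theta> * b ^ 2 / 2 * ?n ^ N = (\<theta> * b ^ 2 * ?n ^ N) / 2" by simp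
    show ?thesis using cnt T2 bad unfolding h by linarith
  qed
  then show ?thesis unfolding N_def .
qed

lemma card_filter_sum:
  assumes "finite S1"
  shows "real (card {x\<in>S1. P x}) = (\<Sum>x\<in>S1. if P x then 1 else 0)"
proof -
  have "(\<Sum>x\<in>{x\<in>S1. P x}. (1::real)) = (\<Sum>x\<in>S1. if P x then 1 else 0)"
    by (rule sum.inter_filter[OF assms])
  then show ?thesis by simp
qed

lemma double_count:
  assumes "finite S1" "finite S2"
  shows "(\<Sum>a\<in>S1. real (card {b\<in>S2. R a b})) = (\<Sum>b\<in>S2. real (card {a\<in>S1. R a b}))"
proof -
  have "(\<Sum>a\<in>S1. real (card {b\<in>S2. R a b})) = (\<Sum>a\<in>S1. \<Sum>b\<in>S2. if R a b then 1 else 0)"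
    using assms by (simp add: card_filter_sum)
  also have "\<dots> = (\<Sum>b\<in>S2. \<Sum>a\<in>S1. if R a b then 1 else 0)" by (rule sum.swap)
  also have "\<dots> = (\<Sum>b\<in>S2. real (card {a\<in>S1. R a b}))"
    using assms by (simp add: card_filter_sum)
  finally show ?thesis .
qed

lemma power_mean:
  fixes f :: "'b \<Rightarrow> real"
  assumes "finite I" "I \<noteq> {}" "\<And>i. i \<in> I \<Longrightarrow> f i \<ge> 0"
  shows "real (card I) * ((\<Sum>i\<in>I. f i) / real (card I)) ^ m \<le> (\<Sum>i\<in>I. f i ^ m)"
proof -
  have cv: "convex_on {0::real..} (\<lambda>x. x ^ m)"
  proof (cases "even m")
    case True
    then show ?thesis using convex_power_even convex_on_subset by blast
  next
    case False
    then show ?thesis using convex_power_odd by blast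
  qed
  have N: "real (card I) > 0" using assms by auto
  have h: "((\<Sum>i\<in>I. (1 / real (card I)) *\<^sub>R f i)) ^ m \<le> (\<Sum>i\<in>I. (1 / real (card I)) * f i ^ m)"
    using convex_on_sum[OF assms(1,2) cv, of "\<lambda>_. 1 / real (card I)" f] assms N by auto
  have e1: "(\<Sum>i\<in>I. (1 / real (card I)) *\<^sub>R f i) = (\<Sum>i\<in>I. f i) / real (card I)"
    by (simp add: sum_divide_distrib)
  have e2: "(\<Sum>i\<in>I. (1 / real (card I)) * f i ^ m) = (\<Sum>i\<in>I. f i ^ m) / real (card I)"
    by (simp add: sum_divide_distrib)
  have "((\<Sum>i\<in>I. f i) / real (card I)) ^ m \<le> (\<Sum>i\<in>I. f i ^ m) / real (card I)"
    using h unfolding e1 e2 .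
  then show ?thesis using N by (simp add: field_simps)
qed

lemma P1_iff: "p \<in> path_verts k q 1 \<longleftrightarrow> p = J 0 \<or> p = J 1 \<or> p \<in> (\<lambda>a. A 0 a) ` {..<k} \<or> p \<in> (\<lambda>b. B 0 b) ` {..<q - 1}"
  by (cases p) auto

lemma gadget:
  fixes \<epsilon> \<gamma> :: real
  assumes G: "is_graph V E" and deg: "\<And>v. v \<in> V \<Longrightarrow> real (card {u\<in>V. E v u}) \<ge> \<gamma> * real (card V)"
    and xV: "x \<in> V" and yV: "y \<in> V" and xy: "x \<noteq> y"
    and Wb: "real (card {w\<in>V. E x w \<and> E y w}) \<ge> \<epsilon> * real (card V)"
    and eps: "\<epsilon> > 0" and gam: "\<gamma> \<ge> 0" and k1: "k \<ge> 1" and q1: "q \<ge> 1"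
    and nb: "real (k + q + 1) ^ 2 \<le> \<epsilon> ^ k * \<gamma> ^ (k * (q - 1)) / 2 * real (card V)"
  shows "real (card (ore k q 1 V E x y)) \<ge> \<epsilon> ^ k * \<gamma> ^ (k * (q - 1)) / 2 * real (card V) ^ (k + q - 1)"
proof -
  have fin: "finite V" using G unfolding is_graph_def by simp
  have Esym: "E v u" if "E u v" for u v using G that unfolding is_graph_def by blast
  have EV: "u \<in> V \<and> v \<in> V" if "E u v" for u v using G that unfolding is_graph_def by blast
  let ?n = "real (card V)"
  let ?P = "path_verts k q 1"
  define W where "W = {w\<in>V. E x w \<and> E y w}"
  define As where "As = (\<lambda>a. A 0 a) ` {..<k}"
  define Bs where "Bs = (\<lambda>b. B 0 b) ` {..<q - 1}"
  have Wfin: "finite W" unfolding W_def using fin by simp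
  have Asfin: "finite As" "card As = k" unfolding As_def by (auto simp: card_image inj_on_def)
  have Bsfin: "finite Bs" "card Bs = q - 1" unfolding Bs_def by (auto simp: card_image inj_on_def)
  define CN where "CN g = {v\<in>V. \<forall>p\<in>As. E (g p) v}" for g :: "pvert \<Rightarrow> 'a"
  define PA where "PA = Pi\<^sub>E As (\<lambda>_. W)"
  define Sg where "Sg = Sigma PA (\<lambda>g. Pi\<^sub>E Bs (\<lambda>_. CN g))"
  define comb where "comb = (\<lambda>(g::pvert \<Rightarrow> 'a, h::pvert \<Rightarrow> 'a) p. if p = J 0 then x else if p = J 1 then y
      else if p \<in> As then g p else if p \<in> Bs then h p else undefined)"
  have PAfin: "finite PA" unfolding PA_def using Asfin Wfin by (simp add: finite_PiE)
  have nJA: "J j \<notin> As" "J j \<notin> Bs" "A i a \<notin> Bs" "B i b \<notin> As" for j i a b unfolding As_def Bs_def by auto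
  have inj: "inj_on comb Sg"
  proof (rule inj_onI)
    fix w w' assume w: "w \<in> Sg" and w': "w' \<in> Sg" and eq: "comb w = comb w'"
    obtain g h where wz: "w = (g, h)" by (cases w) auto
    obtain g' h' where wz': "w' = (g', h')" by (cases w') auto
    have m: "g \<in> Pi\<^sub>E As (\<lambda>_. W)" "h \<in> Pi\<^sub>E Bs (\<lambda>_. CN g)" using w wz unfolding Sg_def PA_def by auto
    have m': "g' \<in> Pi\<^sub>E As (\<lambda>_. W)" "h' \<in> Pi\<^sub>E Bs (\<lambda>_. CN g')" using w' wz' unfolding Sg_def PA_def by auto
    have gg: "g = g'"
    proof (rule PiE_ext[OF m(1) m'(1)])
      fix p assume p: "p \<in> As"
      have "comb w p = comb w' p" using eq by simp
      then show "g p = g' p" using p nJA unfolding wz wz' comb_def by (auto split: if_splits)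
    qed
    have m2': "h' \<in> Pi\<^sub>E Bs (\<lambda>_. CN g)" using m'(2) gg by simp
    have "h = h'"
    proof (rule PiE_ext[OF m(2) m2'])
      fix p assume p: "p \<in> Bs"
      have "comb w p = comb w' p" using eq by simp
      moreover have "p \<notin> As" "p \<noteq> J 0" "p \<noteq> J 1" using p nJA unfolding Bs_def by auto
      ultimately show "h p = h' p" using p unfolding wz wz' comb_def by auto
    qed
    then show "w = w'" using wz wz' gg by simp
  qed
  have combP: "comb w \<in> Pi\<^sub>E ?P (\<lambda>_. V) \<and> comb w (J 0) = x \<and> comb w (J 1) = y \<and>
      (\<forall>u\<in>?P. \<forall>v\<in>?P. path_edge u v \<longrightarrow> E (comb w u) (comb w v))" if w: "w \<in> Sg" for w
  proof -
    obtain g h where wz: "w = (g, h)" by (cases w) auto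
    have m: "g \<in> Pi\<^sub>E As (\<lambda>_. W)" "h \<in> Pi\<^sub>E Bs (\<lambda>_. CN g)" using w wz unfolding Sg_def PA_def by auto
    have gA: "g p \<in> W" if "p \<in> As" for p using m(1) that by auto
    have hB: "h p \<in> CN g" if "p \<in> Bs" for p using m(2) that by auto
    have cA: "comb w p = g p" if "p \<in> As" for p using that nJA unfolding wz comb_def As_def by auto
    have cB: "comb w p = h p" if "p \<in> Bs" for p using that nJA unfolding wz comb_def Bs_def by auto
    have c0: "comb w (J 0) = x" and c1: "comb w (J 1) = y" unfolding wz comb_def by auto
    have inV: "comb w p \<in> V" if "p \<in> ?P" for p
    proof -
      have "p = J 0 \<or> p = J 1 \<or> p \<in> As \<or> p \<in> Bs" using that unfolding P1_iff As_def Bs_def .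
      then show ?thesis
      proof (elim disjE)
        assume "p = J 0" then show ?thesis using c0 xV by simp
      next
        assume "p = J 1" then show ?thesis using c1 yV by simp
      next
        assume "p \<in> As"
        then show ?thesis using cA gA unfolding W_def by auto
      next
        assume "p \<in> Bs"
        then show ?thesis using cB hB unfolding CN_def by auto
      qed
    qed
    have ext: "comb w p = undefined" if "p \<notin> ?P" for p
      using that unfolding P1_iff wz comb_def As_def Bs_def by auto
    have edges: "E (comb w u) (comb w v)" if u: "u \<in> ?P" and v: "v \<in> ?P" and e: "path_edge u v" for u v
    proof -
      have AJ: "E (comb w p) (comb w (J j)) \<and> E (comb w (J j)) (comb w p)" if "p \<in> As" "j \<le> 1" for p j
      proof -
        have "g p \<in> W" using gA that by simp
        then have "E x (g p)" "E y (g p)" unfolding W_def by auto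
        then show ?thesis using cA[OF that(1)] c0 c1 that(2) Esym by (cases j) auto
      qed
      have AB: "E (comb w p) (comb w p') \<and> E (comb w p') (comb w p)" if "p \<in> As" "p' \<in> Bs" for p p'
      proof -
        have "h p' \<in> CN g" using hB that by simp
        then have "E (g p) (h p')" unfolding CN_def using that by auto
        then show ?thesis using cA[OF that(1)] cB[OF that(2)] Esym by auto
      qed
      have Ai: "A i a \<in> ?P \<Longrightarrow> A i a \<in> As" for i a unfolding As_def by auto
      have Bi: "B i b \<in> ?P \<Longrightarrow> i = 0" for i b by auto
      have Ai0: "A i a \<in> ?P \<Longrightarrow> i = 0" for i a by auto
      have Bi': "B 0 b \<in> ?P \<Longrightarrow> B 0 b \<in> Bs" for b unfolding Bs_def by auto
      have key: "E (comb w u') (comb w v') \<and> E (comb w v') (comb w u')"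
        if u': "u' \<in> ?P" and v': "v' \<in> ?P" and ua: "u' = A i a" and vv: "v' = J i \<or> v' = J (Suc i) \<or> (\<exists>b. v' = B i b)"
        for u' v' i a
      proof -
        have i0: "i = 0" using Ai0 u' ua by simp
        have uA: "u' \<in> As" using Ai u' ua by simp
        show ?thesis
        proof (cases "v' = J i")
          case True then show ?thesis using AJ[OF uA, of 0] i0 by simp
        next
          case F1: False
          show ?thesis
          proof (cases "v' = J (Suc i)")
            case True then show ?thesis using AJ[OF uA, of 1] i0 by simp
          next
            case False
            then obtain b where vb: "v' = B i b" using vv F1 by blast
            then have "v' \<in> Bs" using Bi' v' i0 by simp
            then show ?thesis using AB[OF uA] by simp
          qed
        qed
      qed
      have "(\<exists>i a. u = A i a \<and> (v = J i \<or> v = J (Suc i) \<or> (\<exists>b. v = B i b))) \<or>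
            (\<exists>i a. v = A i a \<and> (u = J i \<or> u = J (Suc i) \<or> (\<exists>b. u = B i b)))"
        using e unfolding path_edge_iff .
      then show ?thesis
      proof
        assume "\<exists>i a. u = A i a \<and> (v = J i \<or> v = J (Suc i) \<or> (\<exists>b. v = B i b))"
        then obtain i a where "u = A i a" "v = J i \<or> v = J (Suc i) \<or> (\<exists>b. v = B i b)" by blast
        then show ?thesis using key[OF u v] by blast
      next
        assume "\<exists>i a. v = A i a \<and> (u = J i \<or> u = J (Suc i) \<or> (\<exists>b. u = B i b))"
        then obtain i a where "v = A i a" "u = J i \<or> u = J (Suc i) \<or> (\<exists>b. u = B i b)" by blast
        then show ?thesis using key[OF v u] by blast
      qed
    qed
    have "comb w \<in> Pi\<^sub>E ?P (\<lambda>_. V)" using inV ext by (auto simp: PiE_iff extensional_def)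
    then show ?thesis using c0 c1 edges by blast
  qed
  define T where "T = comb ` Sg"
  have Tsub: "T \<subseteq> {g \<in> Pi\<^sub>E ?P (\<lambda>_. V). g (J 0) = x \<and> g (J 1) = y}"
    unfolding T_def using combP by blast
  have TX: "g \<in> ore k q 1 V E x y" if gT: "g \<in> T" and gi: "inj_on g ?P" for g
  proof -
    obtain w where w: "w \<in> Sg" "g = comb w" using gT unfolding T_def by blast
    show ?thesis using combP[OF w(1)] gi unfolding w(2) ore_def emb_def by blast
  qed
  have cnt: "real (card T) \<le> real (card (ore k q 1 V E x y)) + real (card ?P) ^ 2 * ?n ^ (card ?P - 3)"
    by (rule count_scheme[OF _ _ _ _ xV yV xy fin Tsub TX]) (use ore_fin[OF fin] in auto)
  have cardT: "real (card T) = (\<Sum>g\<in>PA. real (card (CN g)) ^ (q - 1))"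
  proof -
    have "card T = card Sg" unfolding T_def using inj by (simp add: card_image)
    also have "card Sg = (\<Sum>g\<in>PA. card (Pi\<^sub>E Bs (\<lambda>_. CN g)))"
      unfolding Sg_def using PAfin Bsfin fin unfolding CN_def
      by (intro card_SigmaI) (auto simp: finite_PiE)
    also have "\<dots> = (\<Sum>g\<in>PA. card (CN g) ^ (q - 1))"
      using Bsfin by (simp add: card_PiE)
    finally show ?thesis by simp
  qed
  define d where "d v = real (card {w\<in>W. E w v})" for v
  have S1: "(\<Sum>g\<in>PA. real (card (CN g))) = (\<Sum>v\<in>V. d v ^ k)"
  proof -
    have "(\<Sum>g\<in>PA. real (card (CN g))) = (\<Sum>v\<in>V. real (card {g\<in>PA. \<forall>p\<in>As. E (g p) v}))"
      unfolding CN_def by (rule double_count[OF PAfin fin])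
    also have "\<dots> = (\<Sum>v\<in>V. d v ^ k)"
    proof (rule sum.cong[OF refl])
      fix v assume "v \<in> V"
      have "{g\<in>PA. \<forall>p\<in>As. E (g p) v} = Pi\<^sub>E As (\<lambda>_. {w\<in>W. E w v})"
        unfolding PA_def by (auto simp: PiE_iff extensional_def)
      then have "card {g\<in>PA. \<forall>p\<in>As. E (g p) v} = card {w\<in>W. E w v} ^ k"
        using Asfin by (simp add: card_PiE)
      then show "real (card {g\<in>PA. \<forall>p\<in>As. E (g p) v}) = d v ^ k" unfolding d_def by simp
    qed
    finally show ?thesis .
  qed
  have wpos: "real (card W) \<ge> \<epsilon> * ?n" using Wb unfolding W_def .
  have npos: "?n > 0" using xV fin card_gt_0_iff by fastforce
  have Wne: "W \<noteq> {}" using wpos eps npos by (metis card.empty mult_pos_pos not_le of_nat_0)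
  have S2: "(\<Sum>v\<in>V. d v) \<ge> real (card W) * (\<gamma> * ?n)"
  proof -
    have "(\<Sum>v\<in>V. d v) = (\<Sum>w\<in>W. real (card {v\<in>V. E w v}))"
      unfolding d_def by (rule double_count[OF Wfin fin, symmetric])
    also have "\<dots> \<ge> (\<Sum>w\<in>W. \<gamma> * ?n)"
      using deg unfolding W_def by (intro sum_mono) auto
    finally show ?thesis by simp
  qed
  have d0: "d v \<ge> 0" for v unfolding d_def by simp
  have S3: "(\<Sum>v\<in>V. d v ^ k) \<ge> ?n * (real (card W) * \<gamma>) ^ k"
  proof -
    have pm: "?n * ((\<Sum>v\<in>V. d v) / ?n) ^ k \<le> (\<Sum>v\<in>V. d v ^ k)"
      using power_mean[OF fin _ , of d k] d0 xV by blast
    have "real (card W) * \<gamma> \<le> (\<Sum>v\<in>V. d v) / ?n"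
      using S2 npos by (simp add: field_simps)
    then have "(real (card W) * \<gamma>) ^ k \<le> ((\<Sum>v\<in>V. d v) / ?n) ^ k"
      using gam by (intro power_mono) auto
    then show ?thesis using pm npos by (smt (verit) mult_left_mono)
  qed
  have cPA: "card PA = card W ^ k" unfolding PA_def using Asfin by (simp add: card_PiE)
  have PAne: "PA \<noteq> {}" unfolding PA_def using Wne by (simp add: PiE_eq_empty_iff)
  have cPApos: "real (card PA) > 0" using PAne PAfin by (simp add: card_gt_0_iff)
  have S4: "(\<Sum>g\<in>PA. real (card (CN g)) ^ (q - 1)) \<ge> real (card W) ^ k * (?n * \<gamma> ^ k) ^ (q - 1)"
  proof -
    have pm: "real (card PA) * ((\<Sum>g\<in>PA. real (card (CN g))) / real (card PA)) ^ (q - 1)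
        \<le> (\<Sum>g\<in>PA. real (card (CN g)) ^ (q - 1))"
      using power_mean[OF PAfin PAne, of "\<lambda>g. real (card (CN g))"] by simp
    have "?n * \<gamma> ^ k \<le> (\<Sum>g\<in>PA. real (card (CN g))) / real (card PA)"
    proof -
      have "?n * \<gamma> ^ k * real (card PA) = ?n * (real (card W) * \<gamma>) ^ k"
        unfolding cPA by (simp add: power_mult_distrib)
      also have "\<dots> \<le> (\<Sum>g\<in>PA. real (card (CN g)))" using S3 S1 by simp
      finally show ?thesis using cPApos by (simp add: field_simps)
    qed
    then have "(?n * \<gamma> ^ k) ^ (q - 1) \<le> ((\<Sum>g\<in>PA. real (card (CN g))) / real (card PA)) ^ (q - 1)"
      using gam npos by (intro power_mono) auto
    then have "real (card PA) * (?n * \<gamma> ^ k) ^ (q - 1) \<le> (\<Sum>g\<in>PA. real (card (CN g)) ^ (q - 1))"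
      using pm cPApos by (smt (verit) mult_left_mono)
    then show ?thesis unfolding cPA by simp
  qed
  have S5: "real (card W) ^ k * (?n * \<gamma> ^ k) ^ (q - 1) \<ge> \<epsilon> ^ k * \<gamma> ^ (k * (q - 1)) * ?n ^ (k + q - 1)"
  proof -
    have "(\<epsilon> * ?n) ^ k \<le> real (card W) ^ k" using wpos eps npos by (intro power_mono) auto
    then have "(\<epsilon> * ?n) ^ k * (?n * \<gamma> ^ k) ^ (q - 1) \<le> real (card W) ^ k * (?n * \<gamma> ^ k) ^ (q - 1)"
      using gam npos by (intro mult_right_mono) auto
    moreover have "(\<epsilon> * ?n) ^ k * (?n * \<gamma> ^ k) ^ (q - 1) = \<epsilon> ^ k * \<gamma> ^ (k * (q - 1)) * ?n ^ (k + q - 1)"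
    proof -
      have kq: "k + q - 1 = k + (q - 1)" using q1 by simp
      have e1: "(\<epsilon> * ?n) ^ k = \<epsilon> ^ k * ?n ^ k" by (simp only: power_mult_distrib)
      have e2: "(?n * \<gamma> ^ k) ^ (q - 1) = ?n ^ (q - 1) * \<gamma> ^ (k * (q - 1))" by (simp only: power_mult_distrib power_mult)
      have e3: "?n ^ (k + q - 1) = ?n ^ k * ?n ^ (q - 1)" unfolding kq by (simp only: power_add)
      show ?thesis unfolding e1 e2 e3 by (simp only: mult_ac)
    qed
    ultimately show ?thesis by simp
  qed
  define M where "M = \<epsilon> ^ k * \<gamma> ^ (k * (q - 1)) * ?n ^ (k + q - 1)"
  have TM: "real (card T) \<ge> M" unfolding M_def using cardT S4 S5 by linarith
  have cP: "card ?P = k + q + 1" using pv_card'[OF q1, of k 1] by simp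
  have bad: "real (card ?P) ^ 2 * ?n ^ (card ?P - 3) \<le> M / 2"
  proof -
    have "real (card ?P) ^ 2 * ?n ^ (card ?P - 3) \<le> \<epsilon> ^ k * \<gamma> ^ (k * (q - 1)) / 2 * ?n * ?n ^ (card ?P - 3)"
      using nb cP by (intro mult_right_mono) auto
    also have "\<dots> = M / 2"
    proof -
      have "k + q - 1 = Suc (card ?P - 3)" using cP k1 q1 by simp
      then show ?thesis unfolding M_def by (simp add: algebra_simps)
    qed
    finally show ?thesis .
  qed
  have "real (card (ore k q 1 V E x y)) \<ge> M / 2" using cnt TM bad by linarith
  then show ?thesis unfolding M_def by simp
qed

lemma pr_sym: "path_reachable k q s \<beta> V E x y = path_reachable k q s \<beta> V E y x"
  unfolding path_reachable_def path_embeddings_ore by (simp add: Un_commute)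

lemma fr_sym: "family_reachable k q t \<beta> V E x y = family_reachable k q t \<beta> V E y x"
  unfolding family_reachable_def using pr_sym by metis

lemma fr_mono:
  assumes "family_reachable k q t \<beta> V E x y" "t \<le> t'" "\<beta>' \<le> \<beta>"
  shows "family_reachable k q t' \<beta>' V E x y"
proof -
  obtain s where s: "1 \<le> s" "s \<le> 2 ^ t" "path_reachable k q s \<beta> V E x y"
    using assms(1) unfolding family_reachable_def by blast
  have "(2::nat) ^ t \<le> 2 ^ t'" using assms(2) by (simp add: power_increasing)
  moreover have "path_reachable k q s \<beta>' V E x y"
  proof -
    have "\<beta>' * real (card V) ^ (s * (k + q) - 1) \<le> \<beta> * real (card V) ^ (s * (k + q) - 1)"
      using assms(3) by (intro mult_right_mono) auto
    then show ?thesis using s(3) unfolding path_reachable_def by linarith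
  qed
  ultimately show ?thesis unfolding family_reachable_def using s by (meson order_trans)
qed

lemma common_reach:
  fixes \<epsilon> \<gamma> :: real
  assumes G: "is_graph V E" and deg: "\<And>v. v \<in> V \<Longrightarrow> real (card {u\<in>V. E v u}) \<ge> \<gamma> * real (card V)"
    and xV: "x \<in> V" and yV: "y \<in> V" and xy: "x \<noteq> y"
    and Wb: "real (card {w\<in>V. E x w \<and> E y w}) \<ge> \<epsilon> * real (card V)"
    and eps: "\<epsilon> > 0" and gam: "\<gamma> \<ge> 0" and k1: "k \<ge> 1" and q1: "q \<ge> 1"
    and nb: "real (k + q + 1) ^ 2 \<le> \<epsilon> ^ k * \<gamma> ^ (k * (q - 1)) / 2 * real (card V)"
  shows "family_reachable k q 0 (\<epsilon> ^ k * \<gamma> ^ (k * (q - 1)) / 2) V E x y"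
proof -
  have fin: "finite V" using G unfolding is_graph_def by simp
  have g: "real (card (ore k q 1 V E x y)) \<ge> \<epsilon> ^ k * \<gamma> ^ (k * (q - 1)) / 2 * real (card V) ^ (k + q - 1)"
    by (rule gadget[OF assms])
  have "card (ore k q 1 V E x y) \<le> card (path_embeddings k q 1 V E x y)"
    unfolding path_embeddings_ore using fin ore_fin by (intro card_mono) auto
  then have "path_reachable k q 1 (\<epsilon> ^ k * \<gamma> ^ (k * (q - 1)) / 2) V E x y"
    unfolding path_reachable_def using g by simp
  then show ?thesis unfolding family_reachable_def by (intro exI[of _ 1]) auto
qed

lemma trans_step:
  fixes \<beta> \<theta> :: real
  assumes G: "is_graph V E" and q1: "q \<ge> 1" and xV: "x \<in> V" and yV: "y \<in> V" and xy: "x \<noteq> y"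
    and bpos: "\<beta> > 0" and tpos: "\<theta> > 0"
    and Zc: "real (card {z\<in>V. family_reachable k q l \<beta> V E x z \<and> family_reachable k q l \<beta> V E z y}) \<ge> \<theta> * real (card V)"
    and nb: "real (2 ^ Suc l * (k + q) + 1) ^ 2 \<le> \<theta> / 4 ^ l * (\<beta> / 2) ^ 2 / 2 * real (card V)"
  shows "family_reachable k q (Suc l) (\<theta> / 4 ^ l * (\<beta> / 2) ^ 2 / 2) V E x y"
proof -
  have fin: "finite V" using G unfolding is_graph_def by simp
  define Z where "Z = {z\<in>V. family_reachable k q l \<beta> V E x z \<and> family_reachable k q l \<beta> V E z y}"
  define I where "I = {1..(2::nat) ^ l} \<times> {1..(2::nat) ^ l}"
  define Zab where "Zab p = {z\<in>Z. path_reachable k q (fst p) \<beta> V E x z \<and> path_reachable k q (snd p) \<beta> V E z y}" for p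
  have Ifin: "finite I" unfolding I_def by simp
  have cI: "card I = 4 ^ l" unfolding I_def by (simp add: card_cartesian_product power_mult_distrib[symmetric])
  have Zsub: "Z \<subseteq> (\<Union>p\<in>I. Zab p)"
  proof
    fix z assume z: "z \<in> Z"
    then obtain a b where "1 \<le> a" "a \<le> 2 ^ l" "path_reachable k q a \<beta> V E x z"
       "1 \<le> b" "b \<le> 2 ^ l" "path_reachable k q b \<beta> V E z y"
      unfolding Z_def family_reachable_def by blast
    then show "z \<in> (\<Union>p\<in>I. Zab p)" using z unfolding I_def Zab_def by (intro UN_I[of "(a, b)"]) auto
  qed
  have "\<exists>p\<in>I. real (card (Zab p)) \<ge> \<theta> / 4 ^ l * real (card V)"
  proof (rule ccontr)
    assume "\<not> ?thesis"
    then have lt: "\<forall>p\<in>I. real (card (Zab p)) < \<theta> / 4 ^ l * real (card V)" by auto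
    have "card Z \<le> card (\<Union>p\<in>I. Zab p)" using Zsub fin Ifin unfolding Zab_def Z_def
      by (intro card_mono) auto
    also have "\<dots> \<le> (\<Sum>p\<in>I. card (Zab p))" by (rule card_UN_le[OF Ifin])
    finally have "real (card Z) \<le> (\<Sum>p\<in>I. real (card (Zab p)))" by (simp flip: of_nat_sum)
    also have "\<dots> < (\<Sum>p\<in>I. \<theta> / 4 ^ l * real (card V))"
    proof (rule sum_strict_mono_ex1[OF Ifin])
      show "\<forall>p\<in>I. real (card (Zab p)) \<le> \<theta> / 4 ^ l * real (card V)" using lt by (auto intro: less_imp_le)
      have "(1, 1) \<in> I" unfolding I_def by simp
      then show "\<exists>p\<in>I. real (card (Zab p)) < \<theta> / 4 ^ l * real (card V)" using lt by blast
    qed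
    also have "\<dots> = \<theta> * real (card V)" using cI by simp
    finally show False using Zc unfolding Z_def by simp
  qed
  then obtain a b where ab: "(a, b) \<in> I" and Zb: "real (card (Zab (a, b))) \<ge> \<theta> / 4 ^ l * real (card V)"
    by auto
  have a1: "a \<ge> 1" "a \<le> 2 ^ l" and b1: "b \<ge> 1" "b \<le> 2 ^ l" using ab unfolding I_def by auto
  have lb1: "real (card (ore k q a V E x z)) \<ge> \<beta> / 2 * real (card V) ^ (a * (k + q) - 1)" if "z \<in> Zab (a, b)" for z
  proof -
    have "real (card (path_embeddings k q a V E x z)) \<ge> \<beta> * real (card V) ^ (a * (k + q) - 1)"
      using that unfolding Zab_def path_reachable_def by auto
    moreover have "card (path_embeddings k q a V E x z) \<le> 2 * card (ore k q a V E x z)" by (rule card_pe_le[OF fin])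
    ultimately show ?thesis by simp
  qed
  have lb2: "real (card (ore k q b V E z y)) \<ge> \<beta> / 2 * real (card V) ^ (b * (k + q) - 1)" if "z \<in> Zab (a, b)" for z
  proof -
    have "real (card (path_embeddings k q b V E z y)) \<ge> \<beta> * real (card V) ^ (b * (k + q) - 1)"
      using that unfolding Zab_def path_reachable_def by auto
    moreover have "card (path_embeddings k q b V E z y) \<le> 2 * card (ore k q b V E z y)" by (rule card_pe_le[OF fin])
    ultimately show ?thesis by simp
  qed
  have nb': "real (card (path_verts k q (a + b))) ^ 2 \<le> \<theta> / 4 ^ l * (\<beta> / 2) ^ 2 / 2 * real (card V)"
  proof -
    have "card (path_verts k q (a + b)) = (a + b) * (k + q) + 1" by (rule pv_card'[OF q1])
    also have "\<dots> \<le> 2 ^ Suc l * (k + q) + 1" using a1 b1 by (intro add_right_mono mult_right_mono) auto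
    finally have h: "card (path_verts k q (a + b)) \<le> 2 ^ Suc l * (k + q) + 1" .
    then have "real (card (path_verts k q (a + b))) \<le> real (2 ^ Suc l * (k + q) + 1)" by (rule of_nat_mono)
    then have "real (card (path_verts k q (a + b))) ^ 2 \<le> real (2 ^ Suc l * (k + q) + 1) ^ 2"
      by (rule power_mono) simp
    then show ?thesis using nb by linarith
  qed
  have c: "real (card (ore k q (a + b) V E x y)) \<ge> \<theta> / 4 ^ l * (\<beta> / 2) ^ 2 / 2 * real (card V) ^ ((a + b) * (k + q) - 1)"
    by (rule concat[OF fin xV yV xy q1 a1(1) b1(1) _ lb1 lb2 Zb _ _ nb'])
       (use bpos tpos in \<open>auto simp: Zab_def Z_def\<close>)
  have "card (ore k q (a + b) V E x y) \<le> card (path_embeddings k q (a + b) V E x y)"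
    unfolding path_embeddings_ore using fin ore_fin by (intro card_mono) auto
  then have "path_reachable k q (a + b) (\<theta> / 4 ^ l * (\<beta> / 2) ^ 2 / 2) V E x y"
    unfolding path_reachable_def using c by simp
  moreover have "a + b \<le> 2 ^ Suc l" using a1 b1 by simp
  ultimately show ?thesis unfolding family_reachable_def using a1 by (intro exI[of _ "a + b"]) auto
qed

lemma many_common:
  fixes g \<epsilon> :: real
  assumes G: "is_graph V E" and deg: "\<And>v. v \<in> V \<Longrightarrow> real (card {u\<in>V. E v u}) \<ge> g * real (card V)"
    and xV: "x \<in> V" and g0: "g \<ge> 0" and e0: "\<epsilon> \<ge> 0"
  shows "real (card {y\<in>V. real (card {w\<in>V. E x w \<and> E y w}) \<ge> \<epsilon> * real (card V)}) \<ge> (g ^ 2 - \<epsilon>) * real (card V)"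
proof -
  have fin: "finite V" using G unfolding is_graph_def by simp
  have Esym: "E v u" if "E u v" for u v using G that unfolding is_graph_def by blast
  let ?n = "real (card V)"
  define cc where "cc y = real (card {w\<in>V. E x w \<and> E y w})" for y
  define Good where "Good = {y\<in>V. cc y \<ge> \<epsilon> * ?n}"
  have npos: "?n > 0" using xV fin card_gt_0_iff by fastforce
  have lower: "(\<Sum>y\<in>V. cc y) \<ge> g ^ 2 * ?n ^ 2"
  proof -
    have "(\<Sum>y\<in>V. cc y) = (\<Sum>w\<in>V. real (card {y\<in>V. E x w \<and> E y w}))"
      unfolding cc_def by (rule double_count[OF fin fin])
    also have "\<dots> = (\<Sum>w\<in>V. if E x w then real (card {y\<in>V. E w y}) else 0)"
    proof (rule sum.cong[OF refl])
      fix w assume "w \<in> V"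
      have "{y\<in>V. E w y} = {y\<in>V. E y w}" using Esym by blast
      then show "real (card {y\<in>V. E x w \<and> E y w}) = (if E x w then real (card {y\<in>V. E w y}) else 0)" by auto
    qed
    also have "\<dots> = (\<Sum>w\<in>{w\<in>V. E x w}. real (card {y\<in>V. E w y}))"
      using fin by (simp add: sum.inter_filter)
    also have "\<dots> \<ge> (\<Sum>w\<in>{w\<in>V. E x w}. g * ?n)" using deg by (intro sum_mono) auto
    finally have "(\<Sum>y\<in>V. cc y) \<ge> real (card {w\<in>V. E x w}) * (g * ?n)" by simp
    moreover have "real (card {w\<in>V. E x w}) * (g * ?n) \<ge> (g * ?n) * (g * ?n)"
      using deg[OF xV] g0 npos by (intro mult_right_mono) auto
    ultimately show ?thesis by (simp add: power2_eq_square algebra_simps)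
  qed
  have upper: "(\<Sum>y\<in>V. cc y) \<le> real (card Good) * ?n + ?n * (\<epsilon> * ?n)"
  proof -
    have Gfin: "finite Good" unfolding Good_def using fin by simp
    have "(\<Sum>y\<in>V. cc y) = (\<Sum>y\<in>Good. cc y) + (\<Sum>y\<in>V - Good. cc y)"
      using fin by (metis (no_types, lifting) Good_def mem_Collect_eq subsetI sum.subset_diff add.commute)
    also have "(\<Sum>y\<in>Good. cc y) \<le> (\<Sum>y\<in>Good. ?n)"
    proof (rule sum_mono)
      fix y show "cc y \<le> ?n" unfolding cc_def using fin by (simp add: card_mono)
    qed
    also have "(\<Sum>y\<in>V - Good. cc y) \<le> (\<Sum>y\<in>V - Good. \<epsilon> * ?n)"
      unfolding Good_def by (intro sum_mono) auto
    also have "(\<Sum>y\<in>V - Good. \<epsilon> * ?n) = real (card (V - Good)) * (\<epsilon> * ?n)" by simp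
    also have "\<dots> \<le> ?n * (\<epsilon> * ?n)"
    proof -
      have "card (V - Good) \<le> card V" using fin by (simp add: card_mono)
      then show ?thesis using e0 npos by (intro mult_right_mono) auto
    qed
    finally show ?thesis by simp
  qed
  have "real (card Good) * ?n \<ge> (g ^ 2 - \<epsilon>) * ?n * ?n"
    using lower upper by (simp add: power2_eq_square algebra_simps)
  then have "real (card Good) \<ge> (g ^ 2 - \<epsilon>) * ?n" using npos by (simp add: mult_le_cancel_right)
  then show ?thesis unfolding Good_def cc_def .
qed

lemma some_pair:
  fixes D \<epsilon> :: real
  assumes G: "is_graph V E" and SV: "S \<subseteq> V" and cS: "card S = c"
    and deg: "\<And>v. v \<in> V \<Longrightarrow> real (card {u\<in>V. E v u}) \<ge> D"
    and big: "real c * D > real (card V) + real c ^ 2 * (\<epsilon> * real (card V))" and eps: "\<epsilon> \<ge> 0"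
  shows "\<exists>x\<in>S. \<exists>y\<in>S. x \<noteq> y \<and> real (card {w\<in>V. E x w \<and> E y w}) \<ge> \<epsilon> * real (card V)"
proof (rule ccontr)
  assume "\<not> ?thesis"
  then have small: "real (card {w\<in>V. E x w \<and> E y w}) < \<epsilon> * real (card V)" if "x \<in> S" "y \<in> S" "x \<noteq> y" for x y
    using that by (metis not_le)
  have fin: "finite V" using G unfolding is_graph_def by simp
  have Sfin: "finite S" using SV fin finite_subset by blast
  let ?n = "real (card V)"
  define OD where "OD = {p \<in> S \<times> S. fst p \<noteq> snd p}"
  have ODfin: "finite OD" unfolding OD_def using Sfin by simp
  define m where "m z = card {v\<in>S. E v z}" for z
  have mle: "real (m z) \<le> 1 + real (card {p\<in>OD. E (fst p) z \<and> E (snd p) z})" for z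
  proof (cases "{v\<in>S. E v z} = {}")
    case True
    then have "m z = 0" unfolding m_def by (simp only: card.empty)
    then show ?thesis by simp
  next
    case False
    then obtain v0 where v0: "v0 \<in> S" "E v0 z" by blast
    let ?M = "{v\<in>S. E v z}"
    have "(\<lambda>v. (v0, v)) ` (?M - {v0}) \<subseteq> {p\<in>OD. E (fst p) z \<and> E (snd p) z}"
      unfolding OD_def using v0 by auto
    then have "card ((\<lambda>v. (v0, v)) ` (?M - {v0})) \<le> card {p\<in>OD. E (fst p) z \<and> E (snd p) z}"
      using ODfin by (intro card_mono) auto
    moreover have "card ((\<lambda>v. (v0, v)) ` (?M - {v0})) = card (?M - {v0})"
      by (rule card_image) (auto simp: inj_on_def)
    moreover have "real (card ?M) - 1 \<le> real (card (?M - {v0}))"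
      using Sfin by (simp add: card_minus_one_le)
    ultimately show ?thesis unfolding m_def by linarith
  qed
  have "(\<Sum>v\<in>S. real (card {u\<in>V. E v u})) = (\<Sum>z\<in>V. real (m z))"
    unfolding m_def by (rule double_count[OF Sfin fin])
  also have "\<dots> \<le> (\<Sum>z\<in>V. 1 + real (card {p\<in>OD. E (fst p) z \<and> E (snd p) z}))"
    using mle by (intro sum_mono) auto
  also have "\<dots> = ?n + (\<Sum>z\<in>V. real (card {p\<in>OD. E (fst p) z \<and> E (snd p) z}))"
    by (simp add: sum.distrib)
  also have "(\<Sum>z\<in>V. real (card {p\<in>OD. E (fst p) z \<and> E (snd p) z})) = (\<Sum>p\<in>OD. real (card {z\<in>V. E (fst p) z \<and> E (snd p) z}))"
    by (rule double_count[OF fin ODfin])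
  also have "\<dots> \<le> (\<Sum>p\<in>OD. \<epsilon> * ?n)"
    using small unfolding OD_def by (intro sum_mono) (auto intro: less_imp_le)
  also have "\<dots> = real (card OD) * (\<epsilon> * ?n)" by simp
  also have "\<dots> \<le> real c ^ 2 * (\<epsilon> * ?n)"
  proof -
    have "card OD \<le> card (S \<times> S)" unfolding OD_def using Sfin by (intro card_mono) auto
    then have "card OD \<le> c * c" using cS by (simp add: card_cartesian_product)
    then have "real (card OD) \<le> real c ^ 2" by (simp add: power2_eq_square flip: of_nat_mult)
    then show ?thesis using eps by (intro mult_right_mono) auto
  qed
  finally have up: "(\<Sum>v\<in>S. real (card {u\<in>V. E v u})) \<le> ?n + real c ^ 2 * (\<epsilon> * ?n)" by simp
  have "(\<Sum>v\<in>S. real (card {u\<in>V. E v u})) \<ge> (\<Sum>v\<in>S. D)" using deg SV by (intro sum_mono) auto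
  then have "(\<Sum>v\<in>S. real (card {u\<in>V. E v u})) \<ge> real c * D" using cS by simp
  then show False using up big by linarith
qed

lemma div_pow4_le:
  fixes \<theta> :: real assumes "0 \<le> \<theta>" "\<theta> \<le> 1" shows "\<theta> / 4 ^ l \<le> 1"
proof -
  have "(4::real) ^ l \<ge> 1" by (intro one_le_power) simp
  then have "\<theta> / 4 ^ l \<le> \<theta> / 1" using assms by (intro divide_left_mono) auto
  then show ?thesis using assms by linarith
qed

lemma half_bounds: "0 < (X::real) \<Longrightarrow> X \<le> 1 \<Longrightarrow> 0 < X / 2 \<and> X / 2 \<le> 1" by simp

theorem lemma6p11:
  fixes \<gamma> :: real and r k q :: nat
  assumes "\<gamma> > 0" and "real r / 2 < real k" and "k \<le> r - 1" and "r = k + q"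
  shows "let c = nat \<lceil>real r / real q\<rceil> in
    \<exists>\<beta>>0. \<exists>\<alpha>>0. \<exists>n0::nat. \<forall>(V::nat set) E.
      is_graph V E \<longrightarrow> card V \<ge> n0 \<longrightarrow>
      min_deg_ge V E ((1 - real k / real r + \<gamma>) * real (card V)) \<longrightarrow>
      (\<exists>P. partition_on V P \<and> card P \<le> c - 1 \<and>
         (\<forall>X\<in>P. family_closed k q c \<beta> V E X \<and> real (card X) \<ge> \<alpha> * real (card V)))"
proof -
  note gpos = assms(1)
  have k1: "k \<ge> 1" using assms(2) by linarith
  have r1: "r \<ge> 1" using assms(4) k1 by simp
  have q1: "q \<ge> 1" using assms(3,4) r1 by linarith
  have qk: "real q < real k" using assms(2,4) by simp
  define c where "c = nat \<lceil>real r / real q\<rceil>"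
  have qpos: "real q > 0" using q1 by simp
  have rq: "real r / real q > 2"
  proof -
    have "real r = real k + real q" using assms(4) by simp
    then have "real r > 2 * real q" using qk by linarith
    then show ?thesis using qpos by (simp add: field_simps)
  qed
  have cge: "real c \<ge> real r / real q" unfolding c_def by linarith
  have c3: "c \<ge> 3"
  proof -
    have "\<lceil>real r / real q\<rceil> \<ge> 3" using rq by (simp add: le_ceiling_iff)
    then show ?thesis unfolding c_def by linarith
  qed
  have c2: "c \<ge> 2" using c3 by simp
  have cpos: "real c > 0" using c3 by simp
  have cq: "real c * (real q / real r) \<ge> 1"
  proof -
    have "real c * real q \<ge> real r" using cge qpos by (simp add: field_simps)
    then show ?thesis using r1 by (simp add: field_simps)
  qed
  define g where "g = min \<gamma> (1/2)"
  have g0: "g > 0" and gle: "g \<le> \<gamma>" and gh: "g \<le> 1/2" unfolding g_def using gpos by auto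
  define \<epsilon> where "\<epsilon> = g ^ 2 / (2 * real c)"
  define \<delta>0 where "\<delta>0 = g ^ 2 / 4"
  define \<theta> where "\<theta> = \<delta>0 / (4 * real c ^ 2)"
  define \<beta>0 where "\<beta>0 = \<epsilon> ^ k * g ^ (k * (q - 1)) / 2"
  define bet where "bet = rec_nat \<beta>0 (\<lambda>l b. \<theta> / 4 ^ l * (b / 2) ^ 2 / 2)"
  have bet0: "bet 0 = \<beta>0" unfolding bet_def by simp
  have betS: "bet (Suc l) = \<theta> / 4 ^ l * (bet l / 2) ^ 2 / 2" for l unfolding bet_def by simp
  have epos: "\<epsilon> > 0" unfolding \<epsilon>_def using g0 cpos by simp
  have ele: "\<epsilon> \<le> g ^ 2 / 2"
  proof -
    have "g ^ 2 / (2 * real c) \<le> g ^ 2 / 2" using c3 g0 by (intro divide_left_mono) auto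
    then show ?thesis unfolding \<epsilon>_def .
  qed
  have g1: "g \<le> 1" using gh by simp
  have g2le: "g ^ 2 \<le> 1" using g0 g1 by (simp add: power_le_one)
  have e1: "\<epsilon> \<le> 1" using ele g2le by linarith
  have d0pos: "\<delta>0 > 0" unfolding \<delta>0_def using g0 by simp
  have tpos: "\<theta> > 0" unfolding \<theta>_def using d0pos cpos by simp
  have t1: "\<theta> \<le> 1"
  proof -
    have "\<delta>0 \<le> 1" unfolding \<delta>0_def using g2le by simp
    moreover have "4 * real c ^ 2 \<ge> 1"
    proof -
      have "real c ^ 2 \<ge> 1" using c3 by (intro one_le_power) simp
      then show ?thesis by linarith
    qed
    ultimately show ?thesis unfolding \<theta>_def by (simp add: divide_le_eq)
  qed
  have b0pos: "\<beta>0 > 0" unfolding \<beta>0_def using epos g0 by simp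
  have b01: "\<beta>0 \<le> 1"
  proof -
    have "\<epsilon> ^ k \<le> 1" using epos e1 by (simp add: power_le_one)
    moreover have "g ^ (k * (q - 1)) \<le> 1" using g0 g1 by (simp add: power_le_one)
    ultimately have "\<epsilon> ^ k * g ^ (k * (q - 1)) \<le> 1" using epos g0 by (simp add: mult_le_one)
    then show ?thesis unfolding \<beta>0_def by simp
  qed
  have bet_props: "bet l > 0 \<and> bet l \<le> 1" for l
  proof (induction l)
    case 0 then show ?case using bet0 b0pos b01 by simp
  next
    case (Suc l)
    have h1: "(bet l / 2) ^ 2 \<le> 1" using Suc by (simp add: power_le_one)
    have h2: "\<theta> / 4 ^ l \<le> 1" using tpos t1 by (intro div_pow4_le) auto
    have X1: "\<theta> / 4 ^ l * (bet l / 2) ^ 2 \<le> 1" by (rule mult_le_one[OF h2 _ h1]) simp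
    have X0: "\<theta> / 4 ^ l * (bet l / 2) ^ 2 > 0" using tpos Suc by simp
    show ?case unfolding betS by (rule half_bounds[OF X0 X1])
  qed
  have bet_dec: "bet (Suc l) \<le> bet l" for l
  proof -
    have b: "bet l > 0" "bet l \<le> 1" using bet_props by auto
    have "\<theta> / 4 ^ l \<le> 1" using tpos t1 by (intro div_pow4_le) auto
    moreover have "(bet l / 2) ^ 2 / 2 \<le> bet l"
    proof -
      have "(bet l / 2) ^ 2 / 2 = bet l * bet l / 8" by (simp add: power2_eq_square)
      also have "\<dots> \<le> bet l * 1 / 8" using b by (intro divide_right_mono mult_left_mono) auto
      finally show ?thesis using b by simp
    qed
    ultimately have "\<theta> / 4 ^ l * ((bet l / 2) ^ 2 / 2) \<le> 1 * bet l"
      using tpos by (intro mult_mono) auto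
    then show ?thesis unfolding betS by simp
  qed
  have bet_anti: "bet l' \<le> bet l" if "l \<le> l'" for l l'
    using that
  proof (induction l' rule: dec_induct)
    case base then show ?case by simp
  next
    case (step l') then show ?case using bet_dec[of l'] by simp
  qed
  define Kbig where "Kbig = real (k + q + 1) ^ 2 / \<beta>0 + 4 / g ^ 2 + 8 * real c / g ^ 2
      + real (2 ^ c * (k + q) + 1) ^ 2 * 8 * 4 ^ c / (\<theta> * bet c ^ 2) + 1"
  define n0 where "n0 = nat \<lceil>Kbig\<rceil>"
  have bcpos: "bet c > 0" using bet_props by simp
  have Kparts: "real (k + q + 1) ^ 2 / \<beta>0 \<ge> 0" "4 / g ^ 2 \<ge> 0" "8 * real c / g ^ 2 \<ge> 0"
    "real (2 ^ c * (k + q) + 1) ^ 2 * 8 * 4 ^ c / (\<theta> * bet c ^ 2) \<ge> 0"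
    using b0pos g0 tpos bcpos by auto
  have main: "\<forall>(V::nat set) E. is_graph V E \<longrightarrow> card V \<ge> n0 \<longrightarrow>
      min_deg_ge V E ((1 - real k / real r + \<gamma>) * real (card V)) \<longrightarrow>
      (\<exists>P. partition_on V P \<and> card P \<le> c - 1 \<and>
         (\<forall>X\<in>P. family_closed k q c (bet c) V E X \<and> real (card X) \<ge> \<delta>0 / 2 * real (card V)))"
  proof (intro allI impI)
    fix V :: "nat set" and E
    assume G: "is_graph V E" and nV: "card V \<ge> n0"
      and md: "min_deg_ge V E ((1 - real k / real r + \<gamma>) * real (card V))"
    let ?n = "real (card V)"
    have fin: "finite V" using G unfolding is_graph_def by simp
    have nK: "?n \<ge> Kbig" using nV unfolding n0_def by linarith
    have n1: "?n \<ge> 1" using nK Kparts unfolding Kbig_def by linarith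
    have Vne: "V \<noteq> {}" using n1 by auto
    have npos: "?n > 0" using n1 by simp
    have qr: "1 - real k / real r = real q / real r" using assms(4) r1 by (simp add: field_simps)
    have qr0: "real q / real r \<ge> 0" by simp
    have degfull: "real (card {u\<in>V. E v u}) \<ge> (real q / real r + \<gamma>) * ?n" if "v \<in> V" for v
      using md that unfolding min_deg_ge_def qr by auto
    have deg: "real (card {u\<in>V. E v u}) \<ge> g * ?n" if "v \<in> V" for v
    proof -
      have "g \<le> real q / real r + \<gamma>" using gle qr0 by linarith
      then have "g * ?n \<le> (real q / real r + \<gamma>) * ?n" using npos by (intro mult_right_mono) auto
      then show ?thesis using degfull[OF that] by linarith
    qed
    have nb_g: "real (k + q + 1) ^ 2 \<le> \<epsilon> ^ k * g ^ (k * (q - 1)) / 2 * ?n"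
    proof -
      have "real (k + q + 1) ^ 2 / \<beta>0 \<le> ?n" using nK Kparts unfolding Kbig_def by linarith
      then show ?thesis using b0pos unfolding \<beta>0_def[symmetric] by (simp add: divide_le_eq mult.commute)
    qed
    define R where "R l x y = (x \<in> V \<and> y \<in> V \<and> family_reachable k q l (bet l) V E x y)" for l x y
    have reach0: "R 0 x y" if "x \<in> V" "y \<in> V" "x \<noteq> y" "real (card {w\<in>V. E x w \<and> E y w}) \<ge> \<epsilon> * ?n" for x y
    proof -
      have "family_reachable k q 0 (\<epsilon> ^ k * g ^ (k * (q - 1)) / 2) V E x y"
        by (rule common_reach[OF G deg that(1-4) epos _ k1 q1 nb_g]) (use g0 in auto)
      then show ?thesis unfolding R_def bet0 \<beta>0_def using that by simp
    qed
    have "\<exists>P. partition_on V P \<and> card P \<le> c - 1 \<and>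
      (\<forall>X\<in>P. (\<forall>x\<in>X. \<forall>y\<in>X. x \<noteq> y \<longrightarrow> R c x y) \<and> real (card X) \<ge> \<delta>0 / 2 * ?n)"
    proof (rule abstract_partition[OF fin Vne])
      show "R l y x" if "R l x y" for l x y using that fr_sym unfolding R_def by metis
      show "R (Suc l) x y" if "R l x y" for l x y
        using that fr_mono[of k q l "bet l" V E x y "Suc l" "bet (Suc l)"] bet_dec unfolding R_def by auto
      show "real (card {y\<in>V. y \<noteq> x \<and> R 0 x y}) \<ge> \<delta>0 * ?n" if xV: "x \<in> V" for x
      proof -
        define Good where "Good = {y\<in>V. real (card {w\<in>V. E x w \<and> E y w}) \<ge> \<epsilon> * ?n}"
        have mc: "real (card Good) \<ge> (g ^ 2 - \<epsilon>) * ?n"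
          unfolding Good_def by (rule many_common[OF G deg xV]) (use g0 epos in auto)
        have sub: "Good - {x} \<subseteq> {y\<in>V. y \<noteq> x \<and> R 0 x y}"
          using reach0 xV unfolding Good_def by auto
        have "real (card Good) - 1 \<le> real (card (Good - {x}))"
          by (rule card_minus_one_le) (simp add: Good_def fin)
        also have "\<dots> \<le> real (card {y\<in>V. y \<noteq> x \<and> R 0 x y})"
          using sub fin by (simp add: card_mono)
        finally have A: "real (card {y\<in>V. y \<noteq> x \<and> R 0 x y}) \<ge> (g ^ 2 - \<epsilon>) * ?n - 1" using mc by linarith
        have "(g ^ 2 - \<epsilon>) * ?n \<ge> g ^ 2 / 2 * ?n" using ele npos by (intro mult_right_mono) auto
        moreover have "g ^ 2 / 4 * ?n \<ge> 1"
        proof -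
          have "4 / g ^ 2 \<le> ?n" using nK Kparts unfolding Kbig_def by linarith
          then show ?thesis using g0 by (simp add: divide_le_eq mult.commute)
        qed
        ultimately show ?thesis using A unfolding \<delta>0_def by linarith
      qed
      show "\<exists>x\<in>S. \<exists>y\<in>S. x \<noteq> y \<and> R 0 x y" if SV: "S \<subseteq> V" and cS: "card S \<ge> c" for S
      proof -
        have Sfin: "finite S" using SV fin finite_subset by blast
        obtain S' where S': "S' \<subseteq> S" "card S' = c" using obtain_subset_with_card_n[OF cS] by blast
        have big: "real c * ((real q / real r + \<gamma>) * ?n) > ?n + real c ^ 2 * (\<epsilon> * ?n)"
        proof -
          have "real c * ((real q / real r + \<gamma>) * ?n) = real c * (real q / real r) * ?n + real c * \<gamma> * ?n"
            by (simp add: algebra_simps)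
          moreover have "real c * (real q / real r) * ?n \<ge> ?n"
          proof -
            have "1 * ?n \<le> real c * (real q / real r) * ?n" by (rule mult_right_mono[OF cq]) (use npos in simp)
            then show ?thesis by (simp only: mult_1)
          qed
          moreover have "real c ^ 2 * (\<epsilon> * ?n) = real c * (g ^ 2 / 2) * ?n"
            unfolding \<epsilon>_def using cpos by (simp add: power2_eq_square field_simps)
          moreover have "real c * (g ^ 2 / 2) * ?n < real c * \<gamma> * ?n"
          proof -
            have "g ^ 2 / 2 < \<gamma>" using g0 gh gle by (simp add: power2_eq_square) (smt (verit) mult_le_cancel_left1)
            then show ?thesis using cpos npos by simp
          qed
          ultimately show ?thesis by linarith
        qed
        obtain x y where xy: "x \<in> S'" "y \<in> S'" "x \<noteq> y" "real (card {w\<in>V. E x w \<and> E y w}) \<ge> \<epsilon> * ?n"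
          using some_pair[OF G _ S'(2) degfull big] S' SV epos by (meson order_trans less_imp_le)
        then show ?thesis using reach0 S' SV by blast
      qed
      show "R (Suc l) x y" if l: "l < c" and xV: "x \<in> V" and yV: "y \<in> V" and xy: "x \<noteq> y"
        and Z: "real (card {z\<in>V. R l x z \<and> R l z y}) \<ge> \<theta> * ?n" for l x y
      proof -
        have eqZ: "{z\<in>V. R l x z \<and> R l z y} = {z\<in>V. family_reachable k q l (bet l) V E x z \<and> family_reachable k q l (bet l) V E z y}"
          unfolding R_def using xV yV by auto
        have nb: "real (2 ^ Suc l * (k + q) + 1) ^ 2 \<le> \<theta> / 4 ^ l * (bet l / 2) ^ 2 / 2 * ?n"
        proof -
          have bl: "bet c \<le> bet l" using l by (intro bet_anti) simp
          have "real (2 ^ Suc l * (k + q) + 1) \<le> real (2 ^ c * (k + q) + 1)"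
          proof -
            have "(2::nat) ^ Suc l \<le> 2 ^ c" using l by (intro power_increasing) auto
            then have "2 ^ Suc l * (k + q) + 1 \<le> 2 ^ c * (k + q) + 1" by simp
            then show ?thesis by (rule of_nat_mono)
          qed
          then have A: "real (2 ^ Suc l * (k + q) + 1) ^ 2 \<le> real (2 ^ c * (k + q) + 1) ^ 2"
            by (rule power_mono) simp
          have B: "real (2 ^ c * (k + q) + 1) ^ 2 * 8 * 4 ^ c / (\<theta> * bet c ^ 2) \<le> ?n"
            using nK Kparts unfolding Kbig_def by linarith
          have C: "\<theta> * bet c ^ 2 / (8 * 4 ^ c) \<le> \<theta> / 4 ^ l * (bet l / 2) ^ 2 / 2"
          proof -
            have "\<theta> / 4 ^ l * (bet l / 2) ^ 2 / 2 = \<theta> * bet l ^ 2 / (8 * 4 ^ l)"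
              by (simp add: power2_eq_square field_simps)
            moreover have "\<theta> * bet c ^ 2 / (8 * 4 ^ c) \<le> \<theta> * bet l ^ 2 / (8 * 4 ^ l)"
            proof (rule frac_le)
              show "0 \<le> \<theta> * bet l ^ 2" using tpos by simp
              show "\<theta> * bet c ^ 2 \<le> \<theta> * bet l ^ 2" using bl bcpos tpos by (intro mult_left_mono power_mono) auto
              show "0 < 8 * (4::real) ^ l" by simp
              show "8 * (4::real) ^ l \<le> 8 * 4 ^ c" using l by (simp add: power_increasing)
            qed
            ultimately show ?thesis by simp
          qed
          have D: "real (2 ^ c * (k + q) + 1) ^ 2 \<le> \<theta> * bet c ^ 2 / (8 * 4 ^ c) * ?n"
          proof -
            have p: "\<theta> * bet c ^ 2 > 0" using tpos bcpos by simp
            from B have "real (2 ^ c * (k + q) + 1) ^ 2 * (8 * 4 ^ c) \<le> ?n * (\<theta> * bet c ^ 2)"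
              using p by (simp add: divide_le_eq algebra_simps)
            then show ?thesis using p by (simp add: field_simps)
          qed
          have "\<theta> * bet c ^ 2 / (8 * 4 ^ c) * ?n \<le> \<theta> / 4 ^ l * (bet l / 2) ^ 2 / 2 * ?n"
            using C npos by (intro mult_right_mono) auto
          then show ?thesis using A D by linarith
        qed
        have "family_reachable k q (Suc l) (\<theta> / 4 ^ l * (bet l / 2) ^ 2 / 2) V E x y"
          by (rule trans_step[OF G q1 xV yV xy _ tpos _ nb]) (use bet_props Z eqZ in auto)
        then show ?thesis unfolding R_def betS using xV yV by simp
      qed
      show "\<theta> > 0" by (rule tpos)
      show "\<theta> * 4 * real c ^ 2 \<le> \<delta>0" unfolding \<theta>_def using cpos by simp
      show "?n * \<delta>0 > 2 * real c"
      proof -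
        have "8 * real c / g ^ 2 \<le> ?n - 1" using nK Kparts unfolding Kbig_def by linarith
        then have "8 * real c \<le> (?n - 1) * g ^ 2" using g0 by (simp add: divide_le_eq)
        then have a: "8 * real c \<le> ?n * g ^ 2 - g ^ 2" by (simp add: algebra_simps)
        have "g ^ 2 > 0" using g0 by simp
        then have "8 * real c < ?n * g ^ 2" using a by linarith
        then show ?thesis unfolding \<delta>0_def by simp
      qed
      show "c \<ge> 2" by (rule c2)
    qed
    then obtain P where P: "partition_on V P" "card P \<le> c - 1"
      "\<forall>X\<in>P. (\<forall>x\<in>X. \<forall>y\<in>X. x \<noteq> y \<longrightarrow> R c x y) \<and> real (card X) \<ge> \<delta>0 / 2 * ?n" by blast
    show "\<exists>P. partition_on V P \<and> card P \<le> c - 1 \<and>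
         (\<forall>X\<in>P. family_closed k q c (bet c) V E X \<and> real (card X) \<ge> \<delta>0 / 2 * real (card V))"
      using P unfolding family_closed_def R_def by blast
  qed
  show ?thesis unfolding Let_def c_def[symmetric]
    apply (rule exI[of _ "bet c"])
    apply (rule conjI[OF bcpos])
    apply (rule exI[of _ "\<delta>0 / 2"])
    apply (rule conjI)
    using d0pos apply simp
    apply (rule exI[of _ n0])
    using main by blast
qed

end
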